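(* Let $n$ be odd and squarefree with $\Omega(n)=3$ and every prime divisor of $n$ at least $7$. Let $p'$ be a prime divisor of $n$ and $A=L(n;p')$. Let $S=(x_1,x_2,x_3)$ be an $A$-extremal sequence for the Davenport constant in $\mathbb{Z}_n$. Then at least one of the following holds: (i) $S$ is equivalent with respect to $A$ to a sequence $(y_1,y_2,y_3)$ with $y_3\neq 0$, $y_3$ divisible by $n'=n/p'$, and such that the image of $(y_1,y_2)$ under the natural map $\mathbb{Z}_n\to\mathbb{Z}_{n'}$ is an $S(n')$-extremal sequence for the Davenport constant; (ii) $S$ is equivalent with respect to $A$ to a sequence $(y_1,y_2,y_3)$ for which there is a prime divisor $p$ of $n$ such that $y_1$ is the only term not divisible by $p$, and, with $n'=n/p$, $T=(y_2,y_3)$ and $T'$ the image of $T$ under the natural map $\mathbb{Z}_n\to\mathbb{Z}_{n'}$, the sequence $T'$ is an $S(n')$-extremal sequence for the Davenport constant; moreover, if $p\neq p'$, then $T'$ is a $U(n')$-extremal sequence for the Davenport constant.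
   Context: $\mathbb{Z}_m$ is the integers mod $m$, $U(m)$ its unit group. For nonempty $A\subseteq\mathbb{Z}_m\setminus\{0\}$, a sequence $(x_1,\ldots,x_k)$ is an $A$-weighted zero-sum sequence if $\sum a_ix_i=0$ for some $a_i\in A$; $D_A(m)$ is the least $k$ such that every length-$k$ sequence in $\mathbb{Z}_m$ has a nonempty $A$-weighted zero-sum subsequence; an $A$-extremal sequence for the Davenport constant is a sequence of length $D_A(m)-1$ with no $A$-weighted zero-sum subsequence. For a multiplicative group $A$, $(x_1,\ldots,x_k)$ and $(y_1,\ldots,y_k)$ are equivalent with respect to $A$ if there are $a_i\in A$, a unit $c$ and a permutation $\sigma$ with $y_{\sigma(i)}=c\,a_ix_i$ for all $i$. $\Omega(n)$ is the number of prime factors with multiplicity. For odd $m=\prod p_i^{r_i}$, prime $p\mid m$ and $a\in U(m)$, $\left(\frac{a}{p}\right)$ is the Legendre symbol of the image mod $p$, $\left(\frac{a}{m}\right)=\prod\left(\frac{a}{p_i}\right)^{r_i}$, $S(m)$ is the kernel of $a\mapsto\left(\frac{a}{m}\right)$ on $U(m)$, and $L(m;p')=\{a\in U(m):\left(\frac{a}{m}\right)=\left(\frac{a}{p'}\right)\}$ for a prime $p'\mid m$ (a subgroup of $U(m)$). *)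

theory Defs
  imports "HOL-Number_Theory.Number_Theory" "HOL-Computational_Algebra.Squarefree"
    "HOL-Combinatorics.Permutations"
begin

text \<open>Elements of Z_m are represented by integers in {0..<m}; sequences by int lists.\<close>

definition Zmod :: "nat \<Rightarrow> int set" where
  "Zmod m = {0..<int m}"

definition units_mod :: "nat \<Rightarrow> int set" where
  "units_mod m = {a \<in> Zmod m. coprime a (int m)}"

definition weighted_zero_sum :: "nat \<Rightarrow> int set \<Rightarrow> int list \<Rightarrow> bool" where
  "weighted_zero_sum m A xs \<longleftrightarrow>
     (\<exists>a. (\<forall>i<length xs. a i \<in> A) \<and> [(\<Sum>i<length xs. a i * xs ! i) = 0] (mod int m))"

definition has_wzs_subseq :: "nat \<Rightarrow> int set \<Rightarrow> int list \<Rightarrow> bool" where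
  "has_wzs_subseq m A xs \<longleftrightarrow>
     (\<exists>I. I \<subseteq> {..<length xs} \<and> I \<noteq> {} \<and>
        weighted_zero_sum m A (nths xs I))"

definition davenport :: "nat \<Rightarrow> int set \<Rightarrow> nat" where
  "davenport m A = (LEAST k. \<forall>xs. length xs = k \<and> set xs \<subseteq> Zmod m \<longrightarrow> has_wzs_subseq m A xs)"

definition extremal :: "nat \<Rightarrow> int set \<Rightarrow> int list \<Rightarrow> bool" where
  "extremal m A xs \<longleftrightarrow> set xs \<subseteq> Zmod m \<and> length xs = davenport m A - 1 \<and>
     \<not> has_wzs_subseq m A xs"

definition equiv_wrt :: "nat \<Rightarrow> int set \<Rightarrow> int list \<Rightarrow> int list \<Rightarrow> bool" where
  "equiv_wrt m A xs ys \<longleftrightarrow> length xs = length ys \<and> set ys \<subseteq> Zmod m \<and>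
     (\<exists>a c \<sigma>. (\<forall>i<length xs. a i \<in> A) \<and> c \<in> units_mod m \<and> \<sigma> permutes {..<length xs} \<and>
        (\<forall>i<length xs. [ys ! (\<sigma> i) = c * a i * xs ! i] (mod int m)))"

definition jsym :: "int \<Rightarrow> nat \<Rightarrow> int" where
  "jsym a m = (\<Prod>p\<in>prime_factors m. Legendre a (int p) ^ multiplicity p m)"

definition Sgrp :: "nat \<Rightarrow> int set" where
  "Sgrp m = {a \<in> units_mod m. jsym a m = 1}"

definition Lgrp :: "nat \<Rightarrow> nat \<Rightarrow> int set" where
  "Lgrp m p' = {a \<in> units_mod m. jsym a m = Legendre a (int p')}"

end

theory Submission
  imports Defs
begin
lemma pair_pair:
  fixes i j i' j' :: nat and cq cr :: int
  assumes "i < 3" "j < 3" "i' < 3" "j' < 3" "i \<noteq> j" "i' \<noteq> j'" "{i,j} \<noteq> {i',j'}"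
  defines "s \<equiv> (\<lambda>t. if (t = i \<or> t = j) \<and> t \<noteq> i' \<and> t \<noteq> j' then cq
                    else if (t = i' \<or> t = j') \<and> t \<noteq> i \<and> t \<noteq> j then cr else 1)"
  shows "s i * s j = cq \<and> s i' * s j' = cr"
proof -
  have l: "\<And>x::nat. x < 3 \<longleftrightarrow> x = 0 \<or> x = 1 \<or> x = 2" by auto
  show ?thesis using assms(1-7) unfolding s_def l
    by (elim disjE) (simp_all add: doubleton_eq_iff)
qed

lemma lt3_eq: "{..<3::nat} = {0,1,2}" by auto
lemma sub3_cases: assumes "J \<subseteq> {..<3::nat}"
  shows "J = {} \<or> (\<exists>i. J = {i}) \<or> (\<exists>i j. i \<noteq> j \<and> J = {i,j}) \<or> J = {0,1,2}"
proof -
  have f: "finite J" using assms finite_subset by blast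
  have c: "card J \<le> 3" using card_mono[OF _ assms] by simp
  consider "card J = 0" | "card J = 1" | "card J = 2" | "card J = 3" using c by linarith
  thus ?thesis
  proof cases
    case 1 thus ?thesis using f by simp
  next
    case 2 thus ?thesis by (simp add: card_1_singleton_iff)
  next
    case 3 thus ?thesis by (auto simp: card_2_iff)
  next
    case 4 hence "J = {..<3}" using card_subset_eq[OF _ assms] by simp
    thus ?thesis using lt3_eq by simp
  qed
qed

lemma Leg_pm1: assumes "prime p" "\<not> int p dvd a" shows "Legendre a (int p) = 1 \<or> Legendre a (int p) = -1"
  using assms by (auto simp: Legendre_def cong_0_iff)

lemma Leg_0: "int p dvd a \<Longrightarrow> Legendre a (int p) = 0"
  by (auto simp: Legendre_def cong_0_iff)

lemma Leg_cong: assumes "[a = b] (mod m)" shows "Legendre a m = Legendre b m"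
proof -
  have 1: "[a = 0] (mod m) \<longleftrightarrow> [b = 0] (mod m)" using assms
    by (meson cong_sym cong_trans)
  have 2: "QuadRes m a \<longleftrightarrow> QuadRes m b"
  proof
    assume "QuadRes m a" then obtain y where "[y^2 = a] (mod m)" unfolding QuadRes_def by blast
    hence "[y^2 = b] (mod m)" using assms by (rule cong_trans)
    thus "QuadRes m b" unfolding QuadRes_def by blast
  next
    assume "QuadRes m b" then obtain y where "[y^2 = b] (mod m)" unfolding QuadRes_def by blast
    hence "[y^2 = a] (mod m)" using assms cong_sym cong_trans by blast
    thus "QuadRes m a" unfolding QuadRes_def by blast
  qed
  show ?thesis unfolding Legendre_def using 1 2 by simp
qed

lemma Leg_mult: assumes p: "prime p" "2 < p"
  shows "Legendre (a * b) (int p) = Legendre a (int p) * Legendre b (int p)"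
proof -
  let ?k = "(p - 1) div 2"
  have ea: "[Legendre a (int p) = a ^ ?k] (mod int p)" using euler_criterion[OF p] by simp
  have eb: "[Legendre b (int p) = b ^ ?k] (mod int p)" using euler_criterion[OF p] by simp
  have eab: "[Legendre (a*b) (int p) = a ^ ?k * b ^ ?k] (mod int p)" 
    using euler_criterion[OF p, of "a*b"] by (simp add: power_mult_distrib)
  have "[Legendre a (int p) * Legendre b (int p) = a ^ ?k * b ^ ?k] (mod int p)"
    using ea eb by (rule cong_mult)
  hence "[Legendre (a*b) (int p) = Legendre a (int p) * Legendre b (int p)] (mod int p)"
    using eab cong_sym cong_trans by blast
  hence d: "int p dvd Legendre (a*b) (int p) - Legendre a (int p) * Legendre b (int p)"
    by (simp add: cong_iff_dvd_diff)
  have r: "\<And>x. Legendre x (int p) \<in> {-1,0,1}" by (auto simp: Legendre_def)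
  have dd: "Legendre (a*b) (int p) - Legendre a (int p) * Legendre b (int p) \<in> {-2,-1,0,1,2}"
    using r[of "a*b"] r[of a] r[of b] by auto
  have n2: "\<not> int p dvd 2" using p by (auto dest!: zdvd_imp_le)
  have n1: "\<not> int p dvd 1" using p by simp
  show ?thesis
  proof (rule ccontr)
    assume ne: "Legendre (a * b) (int p) \<noteq> Legendre a (int p) * Legendre b (int p)"
    have "int p dvd 2 \<or> int p dvd 1"
      using dd d ne by (auto simp del: dvd_1_iff_1)
    with n1 n2 show False by blast
  qed
qed

lemma Leg_1: "prime p \<Longrightarrow> Legendre 1 (int p) = 1"
  unfolding Legendre_def QuadRes_def
  by (auto simp: cong_0_iff intro!: exI[of _ 1])

lemma exists_NR: assumes p: "prime p" "2 < p"
  shows "\<exists>g. \<not> int p dvd g \<and> Legendre g (int p) = -1"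
proof -
  have "odd p" using p prime_odd_nat by blast
  obtain g where g: "\<forall>k>0. residue_primroot (p ^ k) g"
    using residue_primroot_odd_prime_power_exists[OF p(1) \<open>odd p\<close>] by blast
  hence g1: "residue_primroot p g" by (metis power_one_right zero_less_one)
  hence cop: "coprime p g" and ordg: "ord p g = totient p" by (auto simp: residue_primroot_def)
  have tot: "totient p = p - 1" using p totient_prime by blast
  have ndvd: "\<not> int p dvd int g"
  proof
    assume "int p dvd int g" hence "p dvd g" by simp
    hence "is_unit p" using cop by (simp add: coprime_absorb_left)
    with p show False by simp
  qed
  let ?k = "(p - 1) div 2"
  have k1: "0 < ?k" using p by simp
  have k2: "?k < p - 1" using p by simp
  have "\<not> [g ^ ?k = 1] (mod p)"
  proof
    assume "[g ^ ?k = 1] (mod p)"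
    hence "ord p g dvd ?k" using ord_divides' by simp
    hence "p - 1 dvd ?k" using ordg tot by simp
    with k1 k2 show False by (simp add: nat_dvd_not_less)
  qed
  hence nc: "\<not> [int g ^ ?k = 1] (mod int p)"
    by (metis cong_int_iff of_nat_1 of_nat_power)
  have e: "[Legendre (int g) (int p) = int g ^ ?k] (mod int p)" using euler_criterion[OF p] by simp
  have "Legendre (int g) (int p) \<noteq> 1"
  proof
    assume "Legendre (int g) (int p) = 1"
    with e nc show False using cong_sym by fastforce
  qed
  with Leg_pm1[OF p(1) ndvd] have "Legendre (int g) (int p) = -1" by auto
  with ndvd show ?thesis by blast
qed

definition T3 :: "nat \<Rightarrow> int \<Rightarrow> int \<Rightarrow> int \<Rightarrow> bool" where
  "T3 p c0 c1 c2 \<longleftrightarrow> (\<exists>t0 t1 t2. \<not> int p dvd t0 \<and> \<not> int p dvd t1 \<and> \<not> int p dvd t2 \<and>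
     Legendre t0 (int p) = c0 \<and> Legendre t1 (int p) = c1 \<and> Legendre t2 (int p) = c2 \<and>
     [t0 + t1 + t2 = 0] (mod int p))"

lemma T3_swap1: "T3 p c0 c1 c2 \<Longrightarrow> T3 p c1 c0 c2"
  unfolding T3_def
proof (elim exE conjE)
  fix t0 t1 t2 assume h: "\<not> int p dvd t0" "\<not> int p dvd t1" "\<not> int p dvd t2"
     "Legendre t0 (int p) = c0" "Legendre t1 (int p) = c1" "Legendre t2 (int p) = c2"
     "[t0 + t1 + t2 = 0] (mod int p)"
  have "t1 + t0 + t2 = t0 + t1 + t2" by simp
  thus "\<exists>t0 t1 t2. \<not> int p dvd t0 \<and> \<not> int p dvd t1 \<and> \<not> int p dvd t2 \<and>
     Legendre t0 (int p) = c1 \<and> Legendre t1 (int p) = c0 \<and> Legendre t2 (int p) = c2 \<and>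
     [t0 + t1 + t2 = 0] (mod int p)" using h by metis
qed

lemma T3_swap2: "T3 p c0 c1 c2 \<Longrightarrow> T3 p c0 c2 c1"
  unfolding T3_def
proof (elim exE conjE)
  fix t0 t1 t2 assume h: "\<not> int p dvd t0" "\<not> int p dvd t1" "\<not> int p dvd t2"
     "Legendre t0 (int p) = c0" "Legendre t1 (int p) = c1" "Legendre t2 (int p) = c2"
     "[t0 + t1 + t2 = 0] (mod int p)"
  have "t0 + t2 + t1 = t0 + t1 + t2" by simp
  thus "\<exists>t0 t1 t2. \<not> int p dvd t0 \<and> \<not> int p dvd t1 \<and> \<not> int p dvd t2 \<and>
     Legendre t0 (int p) = c0 \<and> Legendre t1 (int p) = c2 \<and> Legendre t2 (int p) = c1 \<and>
     [t0 + t1 + t2 = 0] (mod int p)" using h by metis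
qed

lemma T3_neg: assumes p: "prime p" "2 < p" and T: "T3 p c0 c1 c2" shows "T3 p (-c0) (-c1) (-c2)"
proof -
  obtain g where g: "\<not> int p dvd g" "Legendre g (int p) = -1" using exists_NR[OF p] by blast
  obtain t0 t1 t2 where t: "\<not> int p dvd t0" "\<not> int p dvd t1" "\<not> int p dvd t2"
     "Legendre t0 (int p) = c0" "Legendre t1 (int p) = c1" "Legendre t2 (int p) = c2"
     "[t0 + t1 + t2 = 0] (mod int p)" using T unfolding T3_def by blast
  have pr: "prime (int p)" using p by simp
  have nd: "\<And>t. \<not> int p dvd t \<Longrightarrow> \<not> int p dvd g * t"
    using g(1) pr by (simp add: prime_dvd_mult_iff)
  have "[g * (t0 + t1 + t2) = g * 0] (mod int p)" using t(7) by (rule cong_scalar_left)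
  hence "[g*t0 + g*t1 + g*t2 = 0] (mod int p)" by (simp add: algebra_simps)
  moreover have "Legendre (g*t0) (int p) = -c0" "Legendre (g*t1) (int p) = -c1" "Legendre (g*t2) (int p) = -c2"
    using Leg_mult[OF p] g t by auto
  ultimately show ?thesis unfolding T3_def using nd t by blast
qed

lemma sq_leg: assumes "prime p" "\<not> int p dvd x" shows "Legendre (x^2) (int p) = 1"
proof -
  have pr: "prime (int p)" using assms by simp
  have "\<not> int p dvd x^2" using assms(2) pr prime_dvd_power by blast
  hence "\<not> [x^2 = 0] (mod int p)" by (simp add: cong_0_iff)
  moreover have "QuadRes (int p) (x^2)" unfolding QuadRes_def using cong_refl by blast
  ultimately show ?thesis unfolding Legendre_def by simp
qed

lemma T3_base1: assumes p: "prime p" "7 \<le> p" shows "T3 p 1 1 (Legendre (-1) (int p))"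
proof -
  have pr: "prime (int p)" using p by simp
  have n3: "\<not> int p dvd 3" using p by (auto dest!: zdvd_imp_le)
  have n4: "\<not> int p dvd 4" using p by (auto dest!: zdvd_imp_le)
  have n5: "\<not> int p dvd 5" using p by (auto dest!: zdvd_imp_le)
  have n25: "\<not> int p dvd 25" using n5 pr prime_dvd_power[of "int p" 5 2] by auto
  have nm25: "\<not> int p dvd -25" using n25 by simp
  have l9: "Legendre 9 (int p) = 1" using sq_leg[OF p(1) n3] by simp
  have l16: "Legendre 16 (int p) = 1" using sq_leg[OF p(1) n4] by simp
  have l25: "Legendre 25 (int p) = 1" using sq_leg[OF p(1) n5] by simp
  have lm25: "Legendre (-25) (int p) = Legendre (-1) (int p)"
    using Leg_mult[OF p(1), of "-1" 25] l25 p by simp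
  have n9: "\<not> int p dvd 9" using n3 pr prime_dvd_power[of "int p" 3 2] by auto
  have n16: "\<not> int p dvd 16" using n4 pr prime_dvd_power[of "int p" 4 2] by auto
  show ?thesis unfolding T3_def
    by (rule exI[of _ 9], rule exI[of _ 16], rule exI[of _ "-25"]) (use n9 n16 nm25 l9 l16 lm25 in auto)
qed

lemma T3_base2: assumes p: "prime p" "7 \<le> p" shows "T3 p 1 1 (- Legendre (-1) (int p))"
proof -
  have p2: "2 < p" using p by simp
  have pr: "prime (int p)" using p by simp
  obtain g where g: "\<not> int p dvd g" "Legendre g (int p) = -1" using exists_NR[OF p(1) p2] by blast
  define h where "h = g mod int p"
  have hp: "0 < h" "h < int p" using g(1) p unfolding h_def
    by (auto simp: dvd_eq_mod_eq_0 intro: le_neq_trans pos_mod_sign)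
  have lh: "Legendre h (int p) = -1" using g(2) Leg_cong[of h g "int p"] unfolding h_def by simp
  define m where "m = (LEAST m::nat. 0 < m \<and> Legendre (int m) (int p) = -1)"
  have ex: "0 < nat h \<and> Legendre (int (nat h)) (int p) = -1" using hp lh by simp
  have m1: "0 < m \<and> Legendre (int m) (int p) = -1" unfolding m_def by (rule LeastI[of "\<lambda>m. 0 < m \<and> Legendre (int m) (int p) = -1", OF ex])
  have mle: "m \<le> nat h" unfolding m_def by (rule Least_le[of "\<lambda>m. 0 < m \<and> Legendre (int m) (int p) = -1", OF ex])
  have m2: "m \<noteq> 1" using m1 Leg_1[OF p(1)] by auto
  hence mm: "0 < m - 1" "m - 1 < m" using m1 by auto
  have "Legendre (int (m - 1)) (int p) \<noteq> -1"
  proof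
    assume a: "Legendre (int (m - 1)) (int p) = -1"
    have "(LEAST m::nat. 0 < m \<and> Legendre (int m) (int p) = -1) \<le> m - 1"
      by (rule Least_le) (use mm a in simp)
    hence "m \<le> m - 1" unfolding m_def[symmetric] .
    with mm show False by simp
  qed
  moreover have nd1: "\<not> int p dvd int (m - 1)"
  proof
    assume "int p dvd int (m - 1)"
    hence "p dvd m - 1" using int_dvd_int_iff by blast
    hence "p \<le> m - 1" using mm dvd_imp_le by blast
    with mle hp show False by simp
  qed
  ultimately have l1: "Legendre (int (m - 1)) (int p) = 1" using Leg_pm1[OF p(1)] by blast
  have nd2: "\<not> int p dvd - int m"
  proof
    assume "int p dvd - int m"
    hence "p \<le> m" using m1 by (simp add: dvd_imp_le)
    with mle hp show False by simp
  qed
  have l2: "Legendre (- int m) (int p) = - Legendre (-1) (int p)"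
    using Leg_mult[OF p(1) p2, of "-1" "int m"] m1 by simp
  have nd0: "\<not> int p dvd 1" using p by simp
  have s: "[int (m - 1) + 1 + - int m = 0] (mod int p)" using mm by simp
  show ?thesis unfolding T3_def
    by (rule exI[of _ "int (m-1)"], rule exI[of _ 1], rule exI[of _ "- int m"])
       (use nd1 nd0 nd2 l1 l2 Leg_1[OF p(1)] s in auto)
qed

lemma T3_all: assumes p: "prime p" "7 \<le> p" and c: "c0 \<in> {1,-1}" "c1 \<in> {1,-1}" "c2 \<in> {1,-1}"
  shows "T3 p c0 c1 c2"
proof -
  have p2: "2 < p" using p by simp
  have e: "Legendre (-1) (int p) = 1 \<or> Legendre (-1) (int p) = -1"
    using Leg_pm1[OF p(1)] p by simp
  have a: "T3 p 1 1 1" "T3 p 1 1 (-1)" using T3_base1[OF p] T3_base2[OF p] e by auto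
  have b: "T3 p (-1) (-1) (-1)" "T3 p (-1) (-1) 1" using T3_neg[OF p(1) p2 a(1)] T3_neg[OF p(1) p2 a(2)] by auto
  have c': "T3 p 1 (-1) 1" "T3 p (-1) 1 1" using T3_swap2[OF a(2)] T3_swap1[OF T3_swap2[OF a(2)]] by auto
  have d: "T3 p (-1) 1 (-1)" "T3 p 1 (-1) (-1)" using T3_swap2[OF b(2)] T3_swap1[OF T3_swap2[OF b(2)]] by auto
  show ?thesis using c a b c' d by (elim insertE emptyE) simp_all
qed

definition solv :: "nat \<Rightarrow> (nat \<Rightarrow> int) \<Rightarrow> nat set \<Rightarrow> (nat \<Rightarrow> int) \<Rightarrow> bool" where
  "solv p z J e \<longleftrightarrow> (\<exists>u. (\<forall>i\<in>J. \<not> int p dvd u i \<and> Legendre (u i) (int p) = e i) \<and>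
      [(\<Sum>i\<in>J. u i * z i) = 0] (mod int p))"

lemma sign_rep: assumes p: "prime p" "2 < p" and s: "s \<in> {1,-1}"
  shows "\<exists>e. \<not> int p dvd e \<and> Legendre e (int p) = s"
proof (cases "s = 1")
  case True thus ?thesis using Leg_1[OF p(1)] p by (intro exI[of _ 1]) simp
next
  case False thus ?thesis using s exists_NR[OF p] by auto
qed

lemma solv_reduce:
  assumes p: "prime p" "2 < p" and J: "finite J" "K \<subseteq> J" and z: "\<forall>i\<in>J-K. int p dvd z i"
    and e: "\<forall>i\<in>J-K. e i \<in> {1,-1}" and s: "solv p z K e"
  shows "solv p z J e"
proof -
  obtain u where u: "\<forall>i\<in>K. \<not> int p dvd u i \<and> Legendre (u i) (int p) = e i"
      "[(\<Sum>i\<in>K. u i * z i) = 0] (mod int p)" using s unfolding solv_def by blast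
  have "\<forall>i\<in>J-K. \<exists>v. \<not> int p dvd v \<and> Legendre v (int p) = e i" using sign_rep[OF p] e by blast
  then obtain v where v: "\<forall>i\<in>J-K. \<not> int p dvd v i \<and> Legendre (v i) (int p) = e i" by metis
  define w where "w = (\<lambda>i. if i \<in> K then u i else v i)"
  have fK: "finite K" using J finite_subset by blast
  have "(\<Sum>i\<in>J. w i * z i) = (\<Sum>i\<in>K. w i * z i) + (\<Sum>i\<in>J-K. w i * z i)"
    using J by (metis add.commute sum.subset_diff)
  also have "(\<Sum>i\<in>K. w i * z i) = (\<Sum>i\<in>K. u i * z i)" unfolding w_def by simp
  finally have eq: "(\<Sum>i\<in>J. w i * z i) = (\<Sum>i\<in>K. u i * z i) + (\<Sum>i\<in>J-K. w i * z i)" .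
  have "int p dvd (\<Sum>i\<in>J-K. w i * z i)" using z by (intro dvd_sum) simp
  hence "[(\<Sum>i\<in>J-K. w i * z i) = 0] (mod int p)" by (simp add: cong_0_iff)
  hence "[(\<Sum>i\<in>J. w i * z i) = 0 + 0] (mod int p)" unfolding eq using u(2) by (intro cong_add)
  moreover have "\<forall>i\<in>J. \<not> int p dvd w i \<and> Legendre (w i) (int p) = e i"
    using u(1) v unfolding w_def by auto
  ultimately show ?thesis unfolding solv_def by auto
qed

lemma solv_empty: "solv p z {} e"
  unfolding solv_def by simp

lemma solv_zero:
  assumes p: "prime p" "2 < p" and J: "finite J" and z: "\<forall>i\<in>J. int p dvd z i"
    and e: "\<forall>i\<in>J. e i \<in> {1,-1}"
  shows "solv p z J e"
  using solv_reduce[OF p J, of "{}" z e] z e solv_empty by auto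

lemma solv_pair:
  assumes p: "prime p" "2 < p" and ij: "i \<noteq> j" and z: "\<not> int p dvd z i" "\<not> int p dvd z j"
    and e: "e i \<in> {1,-1}" "e j \<in> {1,-1}" and c: "e i * e j = Legendre (- (z i * z j)) (int p)"
  shows "solv p z {i,j} e"
proof -
  have pr: "prime (int p)" using p by simp
  have lz: "Legendre (z j) (int p) \<in> {1,-1}" using Leg_pm1[OF p(1) z(2)] by auto
  obtain f where f: "\<not> int p dvd f" "Legendre f (int p) = e i * Legendre (z j) (int p)"
    using sign_rep[OF p, of "e i * Legendre (z j) (int p)"] e lz by auto
  define u where "u = (\<lambda>k. if k = i then z j * f else - (z i * f))"
  have ui: "u i = z j * f" and uj: "u j = - (z i * f)" using ij unfolding u_def by auto
  have "(\<Sum>k\<in>{i,j}. u k * z k) = u i * z i + u j * z j" using ij by simp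
  also have "\<dots> = 0" unfolding ui uj by (simp add: algebra_simps)
  finally have s: "[(\<Sum>k\<in>{i,j}. u k * z k) = 0] (mod int p)" by simp
  have nd: "\<not> int p dvd u i" "\<not> int p dvd u j" unfolding ui uj using z f pr
    by (simp_all add: prime_dvd_mult_iff)
  have l1: "Legendre (u i) (int p) = e i"
    unfolding ui Leg_mult[OF p] f(2) using lz by auto
  have "Legendre (u j) (int p) = Legendre (- (z i * z j)) (int p) * e i"
  proof -
    have a: "u j = (- z i) * f" unfolding uj by simp
    have b: "- (z i * z j) = (- z i) * z j" by simp
    show ?thesis unfolding a b Leg_mult[OF p] f(2) by simp
  qed
  hence "Legendre (u j) (int p) = e i * e j * e i" using c by simp
  hence l2: "Legendre (u j) (int p) = e j" using e(1) by auto
  show ?thesis unfolding solv_def using s nd l1 l2 by (intro exI[of _ u]) auto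
qed

lemma inv_leg: assumes p: "prime p" "2 < p" and x: "\<not> int p dvd x" and w: "[x * w = 1] (mod int p)"
  shows "\<not> int p dvd w \<and> Legendre w (int p) = Legendre x (int p)"
proof -
  have nw: "\<not> int p dvd w"
  proof
    assume "int p dvd w" hence "int p dvd x * w" by simp
    hence "[x * w = 0] (mod int p)" by (simp add: cong_0_iff)
    hence "[1 = 0] (mod int p)" using w cong_sym cong_trans by blast
    thus False using p by (simp add: cong_0_iff)
  qed
  have "Legendre (x * w) (int p) = Legendre 1 (int p)" using Leg_cong[OF w] .
  hence "Legendre x (int p) * Legendre w (int p) = 1" using Leg_mult[OF p] Leg_1[OF p(1)] by simp
  moreover have "Legendre x (int p) \<in> {1,-1}" "Legendre w (int p) \<in> {1,-1}"
    using Leg_pm1[OF p(1) x] Leg_pm1[OF p(1) nw] by auto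
  ultimately have "Legendre w (int p) = Legendre x (int p)" by auto
  with nw show ?thesis by simp
qed

lemma has_inv: assumes "prime p" "\<not> int p dvd x" shows "\<exists>w. [x * w = 1] (mod int p)"
proof -
  have "coprime x (int p)" using assms
    by (metis coprime_commute prime_imp_coprime prime_nat_int_transfer)
  thus ?thesis using cong_solve_coprime_int by blast
qed

lemma solv_triple:
  assumes p: "prime p" "7 \<le> p" and d: "i \<noteq> j" "i \<noteq> k" "j \<noteq> k"
    and z: "\<not> int p dvd z i" "\<not> int p dvd z j" "\<not> int p dvd z k"
    and e: "e i \<in> {1,-1}" "e j \<in> {1,-1}" "e k \<in> {1,-1}"
  shows "solv p z {i,j,k} e"
proof -
  have p2: "2 < p" using p by simp
  obtain wi where wi: "[z i * wi = 1] (mod int p)" using has_inv[OF p(1) z(1)] by blast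
  obtain wj where wj: "[z j * wj = 1] (mod int p)" using has_inv[OF p(1) z(2)] by blast
  obtain wk where wk: "[z k * wk = 1] (mod int p)" using has_inv[OF p(1) z(3)] by blast
  note Wi = inv_leg[OF p(1) p2 z(1) wi] and Wj = inv_leg[OF p(1) p2 z(2) wj]
    and Wk = inv_leg[OF p(1) p2 z(3) wk]
  have lz: "Legendre (z i) (int p) \<in> {1,-1}" "Legendre (z j) (int p) \<in> {1,-1}" "Legendre (z k) (int p) \<in> {1,-1}"
    using Leg_pm1[OF p(1) z(1)] Leg_pm1[OF p(1) z(2)] Leg_pm1[OF p(1) z(3)] by auto
  have "T3 p (e i * Legendre (z i) (int p)) (e j * Legendre (z j) (int p)) (e k * Legendre (z k) (int p))"
    using e lz by (intro T3_all[OF p]) auto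
  then obtain t0 t1 t2 where t: "\<not> int p dvd t0" "\<not> int p dvd t1" "\<not> int p dvd t2"
     "Legendre t0 (int p) = e i * Legendre (z i) (int p)" "Legendre t1 (int p) = e j * Legendre (z j) (int p)"
     "Legendre t2 (int p) = e k * Legendre (z k) (int p)"
     "[t0 + t1 + t2 = 0] (mod int p)" unfolding T3_def by blast
  define u where "u = (\<lambda>a. if a = i then t0 * wi else if a = j then t1 * wj else t2 * wk)"
  have ui: "u i = t0 * wi" and uj: "u j = t1 * wj" and uk: "u k = t2 * wk" using d unfolding u_def by auto
  have "(\<Sum>a\<in>{i,j,k}. u a * z a) = u i * z i + u j * z j + u k * z k" using d by simp
  also have "\<dots> = t0 * (z i * wi) + t1 * (z j * wj) + t2 * (z k * wk)" unfolding ui uj uk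
    by (simp add: algebra_simps)
  finally have eq: "(\<Sum>a\<in>{i,j,k}. u a * z a) = t0 * (z i * wi) + t1 * (z j * wj) + t2 * (z k * wk)" .
  have "[t0 * (z i * wi) + t1 * (z j * wj) + t2 * (z k * wk) = t0 * 1 + t1 * 1 + t2 * 1] (mod int p)"
    using wi wj wk by (intro cong_add cong_mult cong_refl)
  hence "[(\<Sum>a\<in>{i,j,k}. u a * z a) = 0] (mod int p)" unfolding eq using t(7)
    by (simp add: cong_trans)
  moreover have pr: "prime (int p)" using p by simp
  have "\<not> int p dvd u i" "\<not> int p dvd u j" "\<not> int p dvd u k"
    unfolding ui uj uk using t Wi Wj Wk pr by (simp_all add: prime_dvd_mult_iff)
  moreover have "Legendre (u i) (int p) = e i" "Legendre (u j) (int p) = e j" "Legendre (u k) (int p) = e k"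
    unfolding ui uj uk Leg_mult[OF p(1) p2] using t Wi Wj Wk lz by auto
  ultimately show ?thesis unfolding solv_def by (intro exI[of _ u]) auto
qed

lemma solv_free:
  assumes p: "prime p" "7 \<le> p" and J: "J \<subseteq> {..<3}" and c: "card {i\<in>J. \<not> int p dvd z i} \<noteq> 1"
  shows "\<exists>e. (\<forall>i\<in>J. e i \<in> {1,-1}) \<and> solv p z J e"
proof -
  have p2: "2 < p" using p by simp
  let ?N = "{i\<in>J. \<not> int p dvd z i}"
  have fJ: "finite J" using J finite_subset by blast
  have NJ: "?N \<subseteq> J" by auto
  have zr: "\<forall>i\<in>J-?N. int p dvd z i" by auto
  have lc: "Legendre (- (z i * z j)) (int p) \<in> {1,-1}" if "\<not> int p dvd z i" "\<not> int p dvd z j" for i j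
  proof -
    have "\<not> int p dvd (- (z i * z j))" using that p by (simp add: prime_dvd_mult_iff)
    thus ?thesis using Leg_pm1[OF p(1)] by blast
  qed
  have N3: "?N \<subseteq> {..<3}" using J by auto
  from sub3_cases[OF N3] consider "?N = {}" | "\<exists>i. ?N = {i}" | "\<exists>i j. i \<noteq> j \<and> ?N = {i,j}" | "?N = {0,1,2}"
    by blast
  thus ?thesis
  proof cases
    case 1 thus ?thesis using solv_zero[OF p(1) p2 fJ, of z "\<lambda>_. 1"] by auto
  next
    case 2 thus ?thesis using c by auto
  next
    case 3 then obtain i j where ij: "i \<noteq> j" "?N = {i,j}" by blast
    have iN: "i \<in> ?N" "j \<in> ?N" unfolding ij(2) by simp_all
    hence zi: "\<not> int p dvd z i" "\<not> int p dvd z j" by simp_all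
    define e where "e = (\<lambda>k. if k = j then Legendre (- (z i * z j)) (int p) else 1)"
    have e1: "\<forall>k. e k \<in> {1,-1}" unfolding e_def using lc[OF zi] by auto
    have ei: "e i = 1" "e j = Legendre (- (z i * z j)) (int p)" unfolding e_def using ij(1) by auto
    have "solv p z {i,j} e"
      by (rule solv_pair[OF p(1) p2 ij(1) zi]) (use e1 in blast, use e1 in blast, simp add: ei)
    hence "solv p z ?N e" by (simp only: ij(2))
    hence "solv p z J e" using solv_reduce[OF p(1) p2 fJ NJ zr, of e] e1 by blast
    thus ?thesis using e1 by blast
  next
    case 4
    have iN: "0 \<in> ?N" "1 \<in> ?N" "2 \<in> ?N" unfolding 4 by simp_all
    hence zi: "\<not> int p dvd z 0" "\<not> int p dvd z 1" "\<not> int p dvd z 2" by simp_all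
    have "solv p z {0,1,2} (\<lambda>_. 1)" using zi by (intro solv_triple[OF p]) auto
    hence "solv p z ?N (\<lambda>_. 1)" by (simp only: 4)
    hence "solv p z J (\<lambda>_. 1)" using solv_reduce[OF p(1) p2 fJ NJ zr, of "\<lambda>_. 1"] by simp
    thus ?thesis by auto
  qed
qed

definition wzsJ :: "nat \<Rightarrow> int set \<Rightarrow> (nat \<Rightarrow> int) \<Rightarrow> nat set \<Rightarrow> bool" where
  "wzsJ m A z J \<longleftrightarrow> (\<exists>a. (\<forall>i\<in>J. a i \<in> A) \<and> [(\<Sum>i\<in>J. a i * z i) = 0] (mod int m))"

lemma pf2: assumes "prime q" "prime r" "q \<noteq> r"
  shows "prime_factorization (q * r) = {#q, r#}"
  using assms by (simp add: prime_factorization_mult prime_factorization_prime prime_gt_0_nat[THEN less_imp_neq[symmetric]] )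

lemma jsym2: assumes "prime q" "prime r" "q \<noteq> r"
  shows "jsym a (q * r) = Legendre a (int q) * Legendre a (int r)"
proof -
  have pf: "prime_factorization (q * r) = {#q, r#}" using pf2[OF assms] .
  have s: "prime_factors (q * r) = {q, r}" unfolding pf by simp
  have mq: "multiplicity q (q * r) = 1"
    using count_prime_factorization_prime[OF assms(1), of "q*r"] pf assms(3) by simp
  have mr: "multiplicity r (q * r) = 1"
    using count_prime_factorization_prime[OF assms(2), of "q*r"] pf assms(3) by simp
  show ?thesis unfolding jsym_def s using assms(3) mq mr by simp
qed

lemma jsym3: assumes "prime P" "prime q" "prime r" "P \<noteq> q" "P \<noteq> r" "q \<noteq> r"
  shows "jsym a (P * q * r) = Legendre a (int P) * Legendre a (int q) * Legendre a (int r)"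
proof -
  have nz: "P \<noteq> 0" "q \<noteq> 0" "r \<noteq> 0" "P * q \<noteq> 0" using assms by (auto simp: prime_gt_0_nat[THEN less_imp_neq[symmetric]])
  have pf: "prime_factorization (P * q * r) = {#P, q, r#}"
    using assms nz by (simp add: prime_factorization_mult prime_factorization_prime)
  have s: "prime_factors (P * q * r) = {P, q, r}" unfolding pf by auto
  have m1: "multiplicity P (P * q * r) = 1"
    using count_prime_factorization_prime[OF assms(1), of "P*q*r"] pf assms by simp
  have m2: "multiplicity q (P * q * r) = 1"
    using count_prime_factorization_prime[OF assms(2), of "P*q*r"] pf assms by simp
  have m3: "multiplicity r (P * q * r) = 1"
    using count_prime_factorization_prime[OF assms(3), of "P*q*r"] pf assms by simp
  show ?thesis unfolding jsym_def s using assms m1 m2 m3 by (simp add: mult.assoc)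
qed

lemma crt_gen: fixes m1 m2 :: int assumes "coprime m1 m2" "0 < m1" "0 < m2"
  shows "\<exists>x. 0 \<le> x \<and> x < m1 * m2 \<and> [x = u1] (mod m1) \<and> [x = u2] (mod m2)"
proof -
  obtain x where x: "[x = u1] (mod m1)" "[x = u2] (mod m2)"
    using binary_chinese_remainder_int[OF assms(1)] by blast
  let ?y = "x mod (m1 * m2)"
  have "[?y = x] (mod m1)" "[?y = x] (mod m2)"
    by (simp_all add: cong_def mod_mod_cancel)
  hence "[?y = u1] (mod m1)" "[?y = u2] (mod m2)" using x cong_trans by blast+
  moreover have "0 \<le> ?y" "?y < m1 * m2" using assms by simp_all
  ultimately show ?thesis by blast
qed

lemma prime_ndvd_coprime: "prime p \<Longrightarrow> \<not> int p dvd a \<Longrightarrow> coprime a (int p)"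
  by (metis coprime_commute prime_imp_coprime prime_nat_int_transfer)

lemma cop_ndvd: assumes "prime p" "coprime a (int p * m)" shows "\<not> int p dvd a"
proof
  assume d: "int p dvd a"
  have "int p dvd int p * m" by simp
  hence "is_unit (int p)" using coprime_common_divisor[OF assms(2) d] by blast
  thus False using assms(1) by simp
qed

lemma decompS:
  assumes q: "prime q" "q > 2" and r: "prime r" "r > 2" and qr: "q \<noteq> r"
    and w: "wzsJ (q * r) (Sgrp (q * r)) z J"
  shows "\<exists>s. (\<forall>i\<in>J. s i \<in> {1,-1}) \<and> solv q z J s \<and> solv r z J s"
proof -
  obtain a where a: "\<forall>i\<in>J. a i \<in> Sgrp (q * r)" "[(\<Sum>i\<in>J. a i * z i) = 0] (mod int (q * r))"
    using w unfolding wzsJ_def by blast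
  have cop: "coprime (a i) (int q * int r)" and js: "jsym (a i) (q * r) = 1" if "i \<in> J" for i
    using a(1) that unfolding Sgrp_def units_mod_def by auto
  have nq: "\<not> int q dvd a i" if "i \<in> J" for i
    using cop_ndvd[OF q(1) cop[OF that]] .
  have nr: "\<not> int r dvd a i" if "i \<in> J" for i
    using cop_ndvd[OF r(1), of "a i" "int q"] cop[OF that] by (simp add: mult.commute)
  have eq: "Legendre (a i) (int r) = Legendre (a i) (int q)" and pm: "Legendre (a i) (int q) \<in> {1,-1}"
    if "i \<in> J" for i
  proof -
    have "Legendre (a i) (int q) * Legendre (a i) (int r) = 1" using js[OF that] jsym2[OF q(1) r(1) qr] by simp
    moreover have "Legendre (a i) (int q) \<in> {1,-1}" "Legendre (a i) (int r) \<in> {1,-1}"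
      using Leg_pm1[OF q(1) nq[OF that]] Leg_pm1[OF r(1) nr[OF that]] by auto
    ultimately show "Legendre (a i) (int r) = Legendre (a i) (int q)" "Legendre (a i) (int q) \<in> {1,-1}" by auto
  qed
  have sq: "[(\<Sum>i\<in>J. a i * z i) = 0] (mod int q)" using a(2) by (simp add: cong_modulus_mult)
  have sr: "[(\<Sum>i\<in>J. a i * z i) = 0] (mod int r)" using a(2) by (metis cong_modulus_mult mult.commute of_nat_mult)
  show ?thesis
    apply (rule exI[of _ "\<lambda>i. Legendre (a i) (int q)"])
    unfolding solv_def using pm nq nr eq sq sr by (intro conjI exI[of _ a]) auto
qed

lemma decompU:
  assumes q: "prime q" and r: "prime r"
    and w: "wzsJ (q * r) (units_mod (q * r)) z J"
  shows "(\<exists>e. solv q z J e) \<and> (\<exists>e. solv r z J e)"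
proof -
  obtain a where a: "\<forall>i\<in>J. a i \<in> units_mod (q * r)" "[(\<Sum>i\<in>J. a i * z i) = 0] (mod int (q * r))"
    using w unfolding wzsJ_def by blast
  have cop: "coprime (a i) (int q * int r)" if "i \<in> J" for i
    using a(1) that unfolding units_mod_def by auto
  have nq: "\<not> int q dvd a i" if "i \<in> J" for i
    using cop_ndvd[OF q(1) cop[OF that]] .
  have nr: "\<not> int r dvd a i" if "i \<in> J" for i
    using cop_ndvd[OF r(1), of "a i" "int q"] cop[OF that] by (simp add: mult.commute)
  have sq: "[(\<Sum>i\<in>J. a i * z i) = 0] (mod int q)" using a(2) by (simp add: cong_modulus_mult)
  have sr: "[(\<Sum>i\<in>J. a i * z i) = 0] (mod int r)" using a(2) by (metis cong_modulus_mult mult.commute of_nat_mult)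
  have "solv q z J (\<lambda>i. Legendre (a i) (int q))" unfolding solv_def using nq sq by (intro exI[of _ a]) auto
  moreover have "solv r z J (\<lambda>i. Legendre (a i) (int r))" unfolding solv_def using nr sr by (intro exI[of _ a]) auto
  ultimately show ?thesis by blast
qed

lemma int_coprime_primes: "prime q \<Longrightarrow> prime r \<Longrightarrow> q \<noteq> r \<Longrightarrow> coprime (int q) (int r)"
  by (simp add: primes_coprime)

lemma cong_ndvd: "[x = u] (mod int p) \<Longrightarrow> \<not> int p dvd u \<Longrightarrow> \<not> int p dvd x"
  using cong_dvd_iff by blast

lemma sum_cong_mod: assumes "\<forall>i\<in>J. [a i = u i] (mod m)" "[(\<Sum>i\<in>J. u i * z i) = 0] (mod m)"
  shows "[(\<Sum>i\<in>J. a i * z i) = 0] (mod m)"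
proof -
  have "[(\<Sum>i\<in>J. a i * z i) = (\<Sum>i\<in>J. u i * z i)] (mod m)"
    using assms(1) by (intro cong_sum cong_mult cong_refl) auto
  thus ?thesis using assms(2) cong_trans by blast
qed

lemma composeS:
  assumes q: "prime q" "q > 2" and r: "prime r" "r > 2" and qr: "q \<noteq> r"
    and sq: "solv q z J s" and sr: "solv r z J s"
  shows "wzsJ (q * r) (Sgrp (q * r)) z J"
proof -
  obtain uq where uq: "\<forall>i\<in>J. \<not> int q dvd uq i \<and> Legendre (uq i) (int q) = s i"
      "[(\<Sum>i\<in>J. uq i * z i) = 0] (mod int q)" using sq unfolding solv_def by blast
  obtain ur where ur: "\<forall>i\<in>J. \<not> int r dvd ur i \<and> Legendre (ur i) (int r) = s i"
      "[(\<Sum>i\<in>J. ur i * z i) = 0] (mod int r)" using sr unfolding solv_def by blast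
  have cqr: "coprime (int q) (int r)" using int_coprime_primes[OF q(1) r(1) qr] .
  have "\<forall>i\<in>J. \<exists>x. 0 \<le> x \<and> x < int q * int r \<and> [x = uq i] (mod int q) \<and> [x = ur i] (mod int r)"
    using crt_gen[OF cqr] q r by simp
  then obtain a where a: "\<forall>i\<in>J. 0 \<le> a i \<and> a i < int q * int r \<and> [a i = uq i] (mod int q) \<and> [a i = ur i] (mod int r)"
    using bchoice[of J] by metis
  have mem: "a i \<in> Sgrp (q * r)" if i: "i \<in> J" for i
  proof -
    have nq: "\<not> int q dvd a i" using a uq(1) i cong_ndvd by blast
    have nr: "\<not> int r dvd a i" using a ur(1) i cong_ndvd by blast
    have cop: "coprime (a i) (int (q * r))"
      using prime_ndvd_coprime[OF q(1) nq] prime_ndvd_coprime[OF r(1) nr] by simp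
    have lq: "Legendre (a i) (int q) = s i" using Leg_cong[of "a i" "uq i" "int q"] a uq(1) i by simp
    have lr: "Legendre (a i) (int r) = s i" using Leg_cong[of "a i" "ur i" "int r"] a ur(1) i by simp
    have "s i \<in> {1,-1}" using lq Leg_pm1[OF q(1) nq] by auto
    hence "jsym (a i) (q * r) = 1" using jsym2[OF q(1) r(1) qr] lq lr by auto
    thus ?thesis unfolding Sgrp_def units_mod_def Zmod_def using cop a i by auto
  qed
  have s1: "[(\<Sum>i\<in>J. a i * z i) = 0] (mod int q)" using a uq(2) by (intro sum_cong_mod[of J a uq]) auto
  have s2: "[(\<Sum>i\<in>J. a i * z i) = 0] (mod int r)" using a ur(2) by (intro sum_cong_mod[of J a ur]) auto
  have "[(\<Sum>i\<in>J. a i * z i) = 0] (mod int q * int r)" using coprime_cong_mult[OF s1 s2 cqr] .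
  thus ?thesis unfolding wzsJ_def using mem by (intro exI[of _ a]) simp
qed

lemma composeL:
  assumes P: "prime P" "P > 2" and q: "prime q" "q > 2" and r: "prime r" "r > 2"
    and d: "P \<noteq> q" "P \<noteq> r" "q \<noteq> r"
    and sP: "solv P z J e" and sq: "solv q z J s" and sr: "solv r z J s"
  shows "wzsJ (P * q * r) (Lgrp (P * q * r) P) z J"
proof -
  obtain uP where uP: "\<forall>i\<in>J. \<not> int P dvd uP i \<and> Legendre (uP i) (int P) = e i"
      "[(\<Sum>i\<in>J. uP i * z i) = 0] (mod int P)" using sP unfolding solv_def by blast
  obtain uq where uq: "\<forall>i\<in>J. \<not> int q dvd uq i \<and> Legendre (uq i) (int q) = s i"
      "[(\<Sum>i\<in>J. uq i * z i) = 0] (mod int q)" using sq unfolding solv_def by blast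
  obtain ur where ur: "\<forall>i\<in>J. \<not> int r dvd ur i \<and> Legendre (ur i) (int r) = s i"
      "[(\<Sum>i\<in>J. ur i * z i) = 0] (mod int r)" using sr unfolding solv_def by blast
  have cqr: "coprime (int q) (int r)" using int_coprime_primes[OF q(1) r(1) d(3)] .
  have cPqr: "coprime (int P) (int q * int r)"
    using int_coprime_primes[OF P(1) q(1) d(1)] int_coprime_primes[OF P(1) r(1) d(2)] by simp
  have ex: "\<exists>x. 0 \<le> x \<and> x < int P * (int q * int r) \<and> [x = uP i] (mod int P) \<and> [x = uq i] (mod int q) \<and> [x = ur i] (mod int r)" for i
  proof -
    obtain y where y: "[y = uq i] (mod int q)" "[y = ur i] (mod int r)"
      using crt_gen[OF cqr, of "uq i" "ur i"] q r by auto
    obtain x where x: "0 \<le> x" "x < int P * (int q * int r)" "[x = uP i] (mod int P)" "[x = y] (mod int q * int r)"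
      using crt_gen[OF cPqr, of "uP i" y] P q r by auto
    have "[x = y] (mod int q)" "[x = y] (mod int r)" using x(4)
      by (metis cong_modulus_mult mult.commute)+
    thus ?thesis using x y cong_trans by blast
  qed
  then obtain a where a: "\<forall>i. 0 \<le> a i \<and> a i < int P * (int q * int r) \<and> [a i = uP i] (mod int P) \<and> [a i = uq i] (mod int q) \<and> [a i = ur i] (mod int r)"
    by metis
  have mem: "a i \<in> Lgrp (P * q * r) P" if i: "i \<in> J" for i
  proof -
    have nP: "\<not> int P dvd a i" using a uP(1) i cong_ndvd by blast
    have nq: "\<not> int q dvd a i" using a uq(1) i cong_ndvd by blast
    have nr: "\<not> int r dvd a i" using a ur(1) i cong_ndvd by blast
    have cop: "coprime (a i) (int (P * q * r))"
      using prime_ndvd_coprime[OF P(1) nP] prime_ndvd_coprime[OF q(1) nq] prime_ndvd_coprime[OF r(1) nr] by simp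
    have lq: "Legendre (a i) (int q) = s i" using Leg_cong[of "a i" "uq i" "int q"] a uq(1) i by simp
    have lr: "Legendre (a i) (int r) = s i" using Leg_cong[of "a i" "ur i" "int r"] a ur(1) i by simp
    have "s i \<in> {1,-1}" using lq Leg_pm1[OF q(1) nq] by auto
    hence "jsym (a i) (P * q * r) = Legendre (a i) (int P)" using jsym3[OF P(1) q(1) r(1) d] lq lr by auto
    moreover have "a i < int (P * q * r)" using a by (simp add: mult.assoc)
    ultimately show ?thesis unfolding Lgrp_def units_mod_def Zmod_def using cop a i by auto
  qed
  have s1: "[(\<Sum>i\<in>J. a i * z i) = 0] (mod int P)" using a uP(2) by (intro sum_cong_mod[of J a uP]) auto
  have s2: "[(\<Sum>i\<in>J. a i * z i) = 0] (mod int q)" using a uq(2) by (intro sum_cong_mod[of J a uq]) auto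
  have s3: "[(\<Sum>i\<in>J. a i * z i) = 0] (mod int r)" using a ur(2) by (intro sum_cong_mod[of J a ur]) auto
  have "[(\<Sum>i\<in>J. a i * z i) = 0] (mod int q * int r)" using coprime_cong_mult[OF s2 s3 cqr] .
  hence "[(\<Sum>i\<in>J. a i * z i) = 0] (mod int P * (int q * int r))" using coprime_cong_mult[OF s1 _ cPqr] by blast
  thus ?thesis unfolding wzsJ_def using mem by (intro exI[of _ a]) (simp add: mult.assoc)
qed

lemma nths_as_map: "nths xs I = map (\<lambda>i. xs ! i) (filter (\<lambda>i. i \<in> I) [0..<length xs])"
proof (induction xs rule: rev_induct)
  case Nil thus ?case by simp
next
  case (snoc x xs)
  have "nths (xs @ [x]) I = nths xs I @ (if length xs \<in> I then [x] else [])"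
    by (simp add: nths_append)
  also have "nths xs I = map (\<lambda>i. (xs @ [x]) ! i) (filter (\<lambda>i. i \<in> I) [0..<length xs])"
    unfolding snoc by (auto simp: nth_append)
  finally show ?case by simp
qed

lemma wzs_map_distinct: assumes "distinct L"
  shows "weighted_zero_sum m A (map f L) \<longleftrightarrow> wzsJ m A f (set L)"
proof -
  have bij: "bij_betw ((!) L) {..<length L} (set L)" using bij_betw_nth[OF assms] by simp
  have inj: "inj_on ((!) L) {..<length L}" using bij bij_betw_def by blast
  show ?thesis
  proof
    assume "weighted_zero_sum m A (map f L)"
    then obtain a where a: "\<forall>i<length L. a i \<in> A" "[(\<Sum>i<length L. a i * map f L ! i) = 0] (mod int m)"
      unfolding weighted_zero_sum_def by auto
    define b where "b = (\<lambda>j. a (inv_into {..<length L} ((!) L) j))"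
    have bk: "b (L ! k) = a k" if "k < length L" for k
      unfolding b_def using inv_into_f_f[OF inj] that by simp
    have "(\<Sum>j\<in>set L. b j * f j) = (\<Sum>k<length L. b (L ! k) * f (L ! k))"
      using sum.reindex_bij_betw[OF bij, of "\<lambda>j. b j * f j"] by simp
    also have "\<dots> = (\<Sum>k<length L. a k * map f L ! k)" using bk by (intro sum.cong) auto
    finally have s: "(\<Sum>j\<in>set L. b j * f j) = (\<Sum>k<length L. a k * map f L ! k)" .
    have "\<forall>j\<in>set L. b j \<in> A"
    proof
      fix j assume "j \<in> set L" then obtain k where "k < length L" "j = L ! k" by (auto simp: in_set_conv_nth)
      thus "b j \<in> A" using bk a(1) by simp
    qed
    thus "wzsJ m A f (set L)" unfolding wzsJ_def using s a(2) by auto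
  next
    assume "wzsJ m A f (set L)"
    then obtain b where b: "\<forall>j\<in>set L. b j \<in> A" "[(\<Sum>j\<in>set L. b j * f j) = 0] (mod int m)"
      unfolding wzsJ_def by auto
    have "(\<Sum>j\<in>set L. b j * f j) = (\<Sum>k<length L. b (L ! k) * f (L ! k))"
      using sum.reindex_bij_betw[OF bij, of "\<lambda>j. b j * f j"] by simp
    also have "\<dots> = (\<Sum>k<length L. b (L ! k) * map f L ! k)" by (intro sum.cong) auto
    finally have "(\<Sum>j\<in>set L. b j * f j) = (\<Sum>k<length L. b (L ! k) * map f L ! k)" .
    moreover have "\<forall>k<length L. b (L ! k) \<in> A" using b(1) by simp
    ultimately show "weighted_zero_sum m A (map f L)" unfolding weighted_zero_sum_def using b(2)
      by (intro exI[of _ "\<lambda>k. b (L ! k)"]) auto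
  qed
qed

lemma has_wzs_iff: "has_wzs_subseq m A xs \<longleftrightarrow> (\<exists>J\<subseteq>{..<length xs}. J \<noteq> {} \<and> wzsJ m A (\<lambda>i. xs ! i) J)"
proof -
  have key: "weighted_zero_sum m A (nths xs I) \<longleftrightarrow> wzsJ m A (\<lambda>i. xs ! i) I" if "I \<subseteq> {..<length xs}" for I
  proof -
    let ?L = "filter (\<lambda>i. i \<in> I) [0..<length xs]"
    have d: "distinct ?L" by simp
    have s: "set ?L = I" using that by auto
    show ?thesis unfolding nths_as_map wzs_map_distinct[OF d] s ..
  qed
  show ?thesis unfolding has_wzs_subseq_def using key by blast
qed

definition ZSF :: "nat \<Rightarrow> int set \<Rightarrow> nat \<Rightarrow> (nat \<Rightarrow> int) \<Rightarrow> bool" where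
  "ZSF m A k z \<longleftrightarrow> (\<forall>J\<subseteq>{..<k}. J \<noteq> {} \<longrightarrow> \<not> wzsJ m A z J)"

lemma ZSF_list: "\<not> has_wzs_subseq m A xs \<longleftrightarrow> ZSF m A (length xs) (\<lambda>i. xs ! i)"
  unfolding has_wzs_iff ZSF_def by blast

lemma wzsJ_cong: "(\<forall>i\<in>J. z i = z' i) \<Longrightarrow> wzsJ m A z J \<longleftrightarrow> wzsJ m A z' J"
  unfolding wzsJ_def by (metis (no_types, lifting) sum.cong)

lemma ZSF_cong: "(\<forall>i<k. z i = z' i) \<Longrightarrow> ZSF m A k z \<longleftrightarrow> ZSF m A k z'"
  unfolding ZSF_def using wzsJ_cong by (metis lessThan_iff subsetD)

lemma wzsJ_mono: "A \<subseteq> B \<Longrightarrow> wzsJ m A z J \<Longrightarrow> wzsJ m B z J"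
  unfolding wzsJ_def by blast

lemma ZSF_mono: "A \<subseteq> B \<Longrightarrow> ZSF m B k z \<Longrightarrow> ZSF m A k z"
  unfolding ZSF_def using wzsJ_mono by blast

lemma wzsJ_reindex: assumes "inj_on h J" shows "wzsJ m A (z \<circ> h) J \<Longrightarrow> wzsJ m A z (h ` J)"
proof -
  assume "wzsJ m A (z \<circ> h) J"
  then obtain a where a: "\<forall>i\<in>J. a i \<in> A" "[(\<Sum>i\<in>J. a i * (z \<circ> h) i) = 0] (mod int m)"
    unfolding wzsJ_def by blast
  define b where "b = (\<lambda>j. a (inv_into J h j))"
  have bk: "b (h i) = a i" if "i \<in> J" for i unfolding b_def using inv_into_f_f[OF assms that] by simp
  have "(\<Sum>j\<in>h ` J. b j * z j) = (\<Sum>i\<in>J. b (h i) * z (h i))" using sum.reindex[OF assms] by simp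
  also have "\<dots> = (\<Sum>i\<in>J. a i * (z \<circ> h) i)" using bk by (intro sum.cong) auto
  finally have "(\<Sum>j\<in>h ` J. b j * z j) = (\<Sum>i\<in>J. a i * (z \<circ> h) i)" .
  moreover have "\<forall>j\<in>h ` J. b j \<in> A" using bk a(1) by auto
  ultimately show ?thesis unfolding wzsJ_def using a(2) by auto
qed

lemma ZSF_perm: assumes "inj_on h {..<k}" "h ` {..<k} \<subseteq> {..<k}" "ZSF m A k z"
  shows "ZSF m A k (z \<circ> h)"
  unfolding ZSF_def
proof (intro allI impI)
  fix J assume J: "J \<subseteq> {..<k}" "J \<noteq> {}"
  show "\<not> wzsJ m A (z \<circ> h) J"
  proof
    assume "wzsJ m A (z \<circ> h) J"
    hence "wzsJ m A z (h ` J)" using wzsJ_reindex inj_on_subset[OF assms(1) J(1)] by blast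
    moreover have "h ` J \<subseteq> {..<k}" "h ` J \<noteq> {}" using J assms(2) by auto
    ultimately show False using assms(3) unfolding ZSF_def by blast
  qed
qed

lemma solv_full3:
  assumes p: "prime p" "7 \<le> p" and N: "\<forall>i<3. \<not> int p dvd z i" and s: "\<forall>i. s i \<in> {1,-1}"
  shows "solv p z {..<3} s"
proof -
  have "solv p z {0,1,2} s" using N s by (intro solv_triple[OF p]) auto
  thus ?thesis by (simp only: lt3_eq)
qed
lemma solv_full2:
  assumes p: "prime p" "7 \<le> p" and ij: "i \<noteq> j" and N: "{i'\<in>{..<3}. \<not> int p dvd z i'} = {i,j}"
    and s: "\<forall>i. s i \<in> {1,-1}" and c: "s i * s j = Legendre (- (z i * z j)) (int p)"
  shows "solv p z {..<3} s"
proof -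
  have p2: "2 < p" using p by simp
  have iN: "i \<in> {i'\<in>{..<3}. \<not> int p dvd z i'}" "j \<in> {i'\<in>{..<3}. \<not> int p dvd z i'}"
    unfolding N by simp_all
  have zi: "\<not> int p dvd z i" "\<not> int p dvd z j" using iN by simp_all
  have "solv p z {i,j} s" by (rule solv_pair[OF p(1) p2 ij zi]) (use s c in simp_all)
  hence sN: "solv p z {i'\<in>{..<3}. \<not> int p dvd z i'} s" by (simp only: N)
  have sub: "{i'\<in>{..<3}. \<not> int p dvd z i'} \<subseteq> {..<3::nat}" by blast
  have zr: "\<forall>i'\<in>{..<3} - {i'\<in>{..<3}. \<not> int p dvd z i'}. int p dvd z i'" by blast
  have e: "\<forall>i'\<in>{..<3} - {i'\<in>{..<3}. \<not> int p dvd z i'}. s i' \<in> {1,-1}" using s by blast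
  show ?thesis using solv_reduce[OF p(1) p2 finite_lessThan sub zr e sN] .
qed

lemma Leg_neg_prod_pm: assumes "prime p" "\<not> int p dvd x" "\<not> int p dvd y"
  shows "Legendre (- (x * y)) (int p) \<in> {1,-1}"
proof -
  have "\<not> int p dvd (- (x * y))" using assms by (simp add: prime_dvd_mult_iff)
  thus ?thesis using Leg_pm1[OF assms(1)] by blast
qed

lemma big_cases0:
  assumes "N \<subseteq> {..<3::nat}" "card N \<ge> 2"
  shows "N = {0,1,2} \<or> (\<exists>i j. i \<noteq> j \<and> N = {i,j})"
proof -
  have "N \<noteq> {}" using assms(2) by (metis card.empty not_numeral_le_zero)
  moreover have "\<forall>i. N \<noteq> {i}" using assms(2) by auto
  ultimately show ?thesis using sub3_cases[OF assms(1)] by blast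
qed
lemma big_cases:
  assumes "card {i\<in>{..<3::nat}. P i} \<ge> 2"
  shows "{i\<in>{..<3::nat}. P i} = {0,1,2} \<or> (\<exists>i j. i \<noteq> j \<and> {i\<in>{..<3::nat}. P i} = {i,j})"
  by (rule big_cases0[OF _ assms]) blast
lemma pair_pair2:
  fixes i j i' j' :: nat and cq cr :: int and s :: "nat \<Rightarrow> int"
  assumes "i < 3" "j < 3" "i' < 3" "j' < 3" "i \<noteq> j" "i' \<noteq> j'" "{i,j} \<noteq> {i',j'}"
    and sd: "\<forall>t. s t = (if (t = i \<or> t = j) \<and> t \<noteq> i' \<and> t \<noteq> j' then cq
                    else if (t = i' \<or> t = j') \<and> t \<noteq> i \<and> t \<noteq> j then cr else 1)"
  shows "s i * s j = cq \<and> s i' * s j' = cr"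
proof -
  have se: "s = (\<lambda>t. if (t = i \<or> t = j) \<and> t \<noteq> i' \<and> t \<noteq> j' then cq
                    else if (t = i' \<or> t = j') \<and> t \<noteq> i \<and> t \<noteq> j then cr else 1)"
    using sd by (intro ext) simp
  show ?thesis unfolding se by (rule pair_pair[OF assms(1-7)])
qed

lemma case4:
  assumes "X1 \<or> (\<exists>i j. P i j)" "X2 \<or> (\<exists>i j. Q i j)"
  obtains "X1" "X2" | i j where "X1" "Q i j" | i j where "P i j" "X2" | i j i' j' where "P i j" "Q i' j'"
  using assms by blast

lemma coupling:
  assumes q: "prime q" "7 \<le> q" and r: "prime r" "7 \<le> r"
    and cq: "card {i\<in>{..<3::nat}. \<not> int q dvd z i} \<ge> 2"
    and cr: "card {i\<in>{..<3::nat}. \<not> int r dvd z i} \<ge> 2"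
    and nb: "\<forall>i<3. \<not> (int q dvd z i \<and> int r dvd z i)"
  shows "\<exists>s. solv q z {..<3} s \<and> solv r z {..<3} s"
proof -
  let ?Nq = "{i\<in>{..<3::nat}. \<not> int q dvd z i}" and ?Nr = "{i\<in>{..<3::nat}. \<not> int r dvd z i}"
  have allq: "\<forall>i<3. \<not> int q dvd z i" if a: "?Nq = {0,1,2}"
  proof (intro allI impI)
    fix i :: nat assume "i < 3" hence "i \<in> {0,1,2::nat}" by auto
    hence "i \<in> ?Nq" unfolding a .
    thus "\<not> int q dvd z i" by simp
  qed
  have allr: "\<forall>i<3. \<not> int r dvd z i" if a: "?Nr = {0,1,2}"
  proof (intro allI impI)
    fix i :: nat assume "i < 3" hence "i \<in> {0,1,2::nat}" by auto
    hence "i \<in> ?Nr" unfolding a .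
    thus "\<not> int r dvd z i" by simp
  qed
  have pairinfo: "i < 3 \<and> j < 3 \<and> \<not> int p dvd z i \<and> \<not> int p dvd z j"
    if "{i'\<in>{..<3::nat}. \<not> int p dvd z i'} = {i,j}" for p i j
  proof -
    have "i \<in> {i'\<in>{..<3::nat}. \<not> int p dvd z i'}" "j \<in> {i'\<in>{..<3::nat}. \<not> int p dvd z i'}"
      unfolding that by simp_all
    thus ?thesis by simp
  qed
  have A: "?Nq = {0,1,2} \<or> (\<exists>i j. i \<noteq> j \<and> ?Nq = {i,j})" by (rule big_cases[OF cq])
  have B: "?Nr = {0,1,2} \<or> (\<exists>i j. i \<noteq> j \<and> ?Nr = {i,j})" by (rule big_cases[OF cr])
  show ?thesis
  proof (cases rule: case4[OF A B])
    case 1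
    have "solv q z {..<3} (\<lambda>_. 1)" "solv r z {..<3} (\<lambda>_. 1)"
      using solv_full3[OF q allq[OF 1(1)], of "\<lambda>_. 1"] solv_full3[OF r allr[OF 1(2)], of "\<lambda>_. 1"] by simp_all
    thus ?thesis by blast
  next
    case (2 i j)
    have 2: "i \<noteq> j" "?Nq = {0,1,2}" "?Nr = {i,j}" using 2 by simp_all
    note pi = pairinfo[OF 2(3)]
    define c where "c = Legendre (- (z i * z j)) (int r)"
    have c1: "c \<in> {1,-1}" unfolding c_def using Leg_neg_prod_pm[OF r(1)] pi by blast
    define s where "s = (\<lambda>t. if t = j then c else (1::int))"
    have s1: "\<forall>t. s t \<in> {1,-1}" using c1 unfolding s_def by auto
    have "solv q z {..<3} s" using solv_full3[OF q allq[OF 2(2)] s1] .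
    moreover have "solv r z {..<3} s"
      using 2(1) by (intro solv_full2[OF r 2(1) 2(3) s1]) (simp add: s_def c_def)
    ultimately show ?thesis by blast
  next
    case (3 i j)
    have 3: "i \<noteq> j" "?Nq = {i,j}" "?Nr = {0,1,2}" using 3 by simp_all
    note pi = pairinfo[OF 3(2)]
    define c where "c = Legendre (- (z i * z j)) (int q)"
    have c1: "c \<in> {1,-1}" unfolding c_def using Leg_neg_prod_pm[OF q(1)] pi by blast
    define s where "s = (\<lambda>t. if t = j then c else (1::int))"
    have s1: "\<forall>t. s t \<in> {1,-1}" using c1 unfolding s_def by auto
    have "solv r z {..<3} s" using solv_full3[OF r allr[OF 3(3)] s1] .
    moreover have "solv q z {..<3} s"
      using 3(1) by (intro solv_full2[OF q 3(1) 3(2) s1]) (simp add: s_def c_def)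
    ultimately show ?thesis by blast
  next
    case (4 i j i' j')
    have 4: "i \<noteq> j" "?Nq = {i,j}" "i' \<noteq> j'" "?Nr = {i',j'}" using 4 by simp_all
    note pi = pairinfo[OF 4(2)] and pi' = pairinfo[OF 4(4)]
    have ne: "{i,j} \<noteq> {i',j'}"
    proof
      assume e: "{i,j} = {i',j'}"
      have "\<exists>k\<in>{0,1,2::nat}. k \<noteq> i \<and> k \<noteq> j" using 4(1) by auto
      then obtain k where k: "k \<in> {0,1,2::nat}" "k \<noteq> i" "k \<noteq> j" by blast
      have k3: "k < 3" using k(1) by auto
      have "k \<notin> ?Nq" unfolding 4(2) using k by simp
      hence "int q dvd z k" using k3 by simp
      moreover have "k \<notin> ?Nr" unfolding 4(4) e[symmetric] using k by simp
      hence "int r dvd z k" using k3 by simp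
      ultimately show False using nb k3 by blast
    qed
    define cq' where "cq' = Legendre (- (z i * z j)) (int q)"
    define cr' where "cr' = Legendre (- (z i' * z j')) (int r)"
    have c1: "cq' \<in> {1,-1}" unfolding cq'_def using Leg_neg_prod_pm[OF q(1)] pi by blast
    have c2: "cr' \<in> {1,-1}" unfolding cr'_def using Leg_neg_prod_pm[OF r(1)] pi' by blast
    define s where "s = (\<lambda>t. if (t = i \<or> t = j) \<and> t \<noteq> i' \<and> t \<noteq> j' then cq'
                    else if (t = i' \<or> t = j') \<and> t \<noteq> i \<and> t \<noteq> j then cr' else 1)"
    have s1: "\<forall>t. s t \<in> {1,-1}" using c1 c2 unfolding s_def by auto
    have pp: "s i * s j = cq' \<and> s i' * s j' = cr'"
      by (rule pair_pair2) (use pi pi' 4(1) 4(3) ne in \<open>simp_all add: s_def\<close>)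
    have "solv q z {..<3} s" using pp by (intro solv_full2[OF q 4(1) 4(2) s1]) (simp add: cq'_def)
    moreover have "solv r z {..<3} s" using pp by (intro solv_full2[OF r 4(3) 4(4) s1]) (simp add: cr'_def)
    ultimately show ?thesis by blast
  qed
qed

lemma card_ge2:
  assumes "\<forall>j<3. \<forall>k<3. j \<noteq> k \<longrightarrow> \<not> (P j \<and> P k)"
  shows "card {i\<in>{..<3::nat}. \<not> P i} \<ge> 2"
proof -
  have h: "\<not> (P 0 \<and> P 1)" "\<not> (P 0 \<and> P 2)" "\<not> (P 1 \<and> P 2)"
    using assms[rule_format, of 0 1] assms[rule_format, of 0 2] assms[rule_format, of 1 2] by auto
  have fin: "finite {i\<in>{..<3::nat}. \<not> P i}" by simp
  have two: "2 \<le> card {i\<in>{..<3::nat}. \<not> P i}" if "a < 3" "b < 3" "a \<noteq> b" "\<not> P a" "\<not> P b" for a b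
  proof -
    have "{a,b} \<subseteq> {i\<in>{..<3::nat}. \<not> P i}" using that by auto
    hence "card {a,b} \<le> card {i\<in>{..<3::nat}. \<not> P i}" using card_mono[OF fin] by blast
    thus ?thesis using that(3) by simp
  qed
  show ?thesis
  proof (cases "P 0")
    case True thus ?thesis using h two[of 1 2] by simp
  next
    case False
    show ?thesis
    proof (cases "P 1")
      case True thus ?thesis using h False two[of 0 2] by simp
    next
      case F1: False thus ?thesis using False two[of 0 1] by simp
    qed
  qed
qed

lemma UB:
  assumes q: "prime q" "7 \<le> q" and r: "prime r" "7 \<le> r" and qr: "q \<noteq> r"
  shows "\<exists>J\<subseteq>{..<3}. J \<noteq> {} \<and> wzsJ (q * r) (Sgrp (q * r)) z J"
proof -
  have q2: "2 < q" and r2: "2 < r" using q r by auto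
  show ?thesis
  proof (cases "\<exists>i<3. int q dvd z i \<and> int r dvd z i")
    case True
    then obtain i where i: "i < 3" "int q dvd z i" "int r dvd z i" by blast
    have "solv q z {i} (\<lambda>_. 1)" using i by (intro solv_zero[OF q(1) q2]) auto
    moreover have "solv r z {i} (\<lambda>_. 1)" using i by (intro solv_zero[OF r(1) r2]) auto
    ultimately have "wzsJ (q * r) (Sgrp (q * r)) z {i}" by (rule composeS[OF q(1) q2 r(1) r2 qr])
    thus ?thesis using i by (intro exI[of _ "{i}"]) auto
  next
    case nb: False
    have pair: "\<exists>J\<subseteq>{..<3}. J \<noteq> {} \<and> wzsJ (p1 * p2) (Sgrp (p1 * p2)) z J"
      if p1: "prime p1" "7 \<le> p1" and p2: "prime p2" "7 \<le> p2" and d: "p1 \<noteq> p2"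
        and jk: "j < 3" "k < 3" "j \<noteq> k" "int p1 dvd z j" "int p1 dvd z k"
        and n2: "\<not> int p2 dvd z j" "\<not> int p2 dvd z k" for p1 p2 j k
    proof -
      have p12: "2 < p1" "2 < p2" using p1 p2 by auto
      define c where "c = Legendre (- (z j * z k)) (int p2)"
      have c1: "c \<in> {1,-1}" unfolding c_def using Leg_neg_prod_pm[OF p2(1) n2] .
      define s where "s = (\<lambda>t. if t = k then c else (1::int))"
      have s1: "\<forall>t. s t \<in> {1,-1}" using c1 unfolding s_def by auto
      have "solv p1 z {j,k} s" using jk s1 by (intro solv_zero[OF p1(1) p12(1)]) auto
      moreover have "solv p2 z {j,k} s"
        by (rule solv_pair[OF p2(1) p12(2) jk(3) n2]) (use s1 in blast, use s1 in blast, use jk(3) in \<open>simp add: s_def c_def\<close>)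
      ultimately have "wzsJ (p1 * p2) (Sgrp (p1 * p2)) z {j,k}" by (rule composeS[OF p1(1) p12(1) p2(1) p12(2) d])
      thus ?thesis using jk by (intro exI[of _ "{j,k}"]) auto
    qed
    show ?thesis
    proof (cases "\<exists>j<3. \<exists>k<3. j \<noteq> k \<and> int q dvd z j \<and> int q dvd z k")
      case True
      then obtain j k where jk: "j < 3" "k < 3" "j \<noteq> k" "int q dvd z j" "int q dvd z k" by blast
      have "\<not> int r dvd z j" "\<not> int r dvd z k" using nb jk by auto
      thus ?thesis using pair[OF q r qr jk] by blast
    next
      case nq: False
      show ?thesis
      proof (cases "\<exists>j<3. \<exists>k<3. j \<noteq> k \<and> int r dvd z j \<and> int r dvd z k")
        case True
        then obtain j k where jk: "j < 3" "k < 3" "j \<noteq> k" "int r dvd z j" "int r dvd z k" by blast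
        have "\<not> int q dvd z j" "\<not> int q dvd z k" using nb jk by auto
        hence "\<exists>J\<subseteq>{..<3}. J \<noteq> {} \<and> wzsJ (r * q) (Sgrp (r * q)) z J"
          using pair[OF r q qr[symmetric] jk] by blast
        thus ?thesis by (simp add: mult.commute)
      next
        case nr: False
        have cq: "card {i\<in>{..<3::nat}. \<not> int q dvd z i} \<ge> 2" using nq by (intro card_ge2) blast
        have cr: "card {i\<in>{..<3::nat}. \<not> int r dvd z i} \<ge> 2" using nr by (intro card_ge2) blast
        obtain s where "solv q z {..<3} s" "solv r z {..<3} s"
          using coupling[OF q r cq cr] nb by blast
        hence "wzsJ (q * r) (Sgrp (q * r)) z {..<3}" by (rule composeS[OF q(1) q2 r(1) r2 qr])
        moreover have "{..<3::nat} \<noteq> {}" by (simp add: lt3_eq)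
        ultimately show ?thesis by blast
      qed
    qed
  qed
qed

lemma solv_one_nonzero:
  assumes p: "prime p" and J: "finite J" "i \<in> J" and z: "\<forall>j\<in>J-{i}. int p dvd z j" "\<not> int p dvd z i"
  shows "\<not> solv p z J e"
proof
  assume "solv p z J e"
  then obtain u where u: "\<forall>j\<in>J. \<not> int p dvd u j" "[(\<Sum>j\<in>J. u j * z j) = 0] (mod int p)"
    unfolding solv_def by blast
  have "(\<Sum>j\<in>J. u j * z j) = u i * z i + (\<Sum>j\<in>J-{i}. u j * z j)" using J by (simp add: sum.remove)
  moreover have "int p dvd (\<Sum>j\<in>J-{i}. u j * z j)" using z(1) by (intro dvd_sum) simp
  moreover have "int p dvd (\<Sum>j\<in>J. u j * z j)" using u(2) by (simp add: cong_0_iff)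
  ultimately have "int p dvd u i * z i" by (metis dvd_add_left_iff)
  moreover have "prime (int p)" using p by simp
  ultimately show False using u(1) J(2) z(2) by (simp add: prime_dvd_mult_iff)
qed

lemma ZSF2_ex:
  assumes q: "prime q" and r: "prime r" and qr: "q \<noteq> r"
  shows "ZSF (q * r) (units_mod (q * r)) 2 (\<lambda>i. [1, int q] ! i)"
  unfolding ZSF_def
proof (intro allI impI notI)
  fix J assume J: "J \<subseteq> {..<2}" "J \<noteq> {}" and w: "wzsJ (q * r) (units_mod (q * r)) (\<lambda>i. [1, int q] ! i) J"
  have d: "(\<exists>e. solv q (\<lambda>i. [1, int q] ! i) J e) \<and> (\<exists>e. solv r (\<lambda>i. [1, int q] ! i) J e)"
    using decompU[OF q r w] .
  have fJ: "finite J" using J finite_subset by blast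
  have sub: "J \<subseteq> {0,1}" using J(1) by auto
  have nq: "\<not> int q dvd 1" using prime_gt_1_nat[OF q] by simp
  have nr: "\<not> int r dvd int q" using q r qr
    by (metis int_dvd_int_iff primes_dvd_imp_eq)
  show False
  proof (cases "0 \<in> J")
    case True
    have "\<not> solv q (\<lambda>i. [1, int q] ! i) J e" for e
      by (rule solv_one_nonzero[OF q fJ True]) (use sub nq in auto)
    thus False using d by blast
  next
    case False
    hence "J = {1}" using sub J(2) by auto
    have "\<not> solv r (\<lambda>i. [1, int q] ! i) J e" for e
      by (rule solv_one_nonzero[OF r fJ]) (use \<open>J = {1}\<close> nr in auto)
    thus False using d by blast
  qed
qed

lemma ZSF_less: assumes "ZSF m A k z" "k' \<le> k" shows "ZSF m A k' z"
  unfolding ZSF_def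
proof (intro allI impI)
  fix J assume J: "J \<subseteq> {..<k'}" "J \<noteq> {}"
  hence "J \<subseteq> {..<k}" using assms(2) by auto
  thus "\<not> wzsJ m A z J" using assms(1) J(2) unfolding ZSF_def by blast
qed

lemma davenport3:
  assumes q: "prime q" "7 \<le> q" and r: "prime r" "7 \<le> r" and qr: "q \<noteq> r"
    and G: "Sgrp (q * r) \<subseteq> G" "G \<subseteq> units_mod (q * r)"
  shows "davenport (q * r) G = 3"
  unfolding davenport_def
proof (rule Least_equality)
  show "\<forall>xs. length xs = 3 \<and> set xs \<subseteq> Zmod (q * r) \<longrightarrow> has_wzs_subseq (q * r) G xs"
  proof (intro allI impI)
    fix xs :: "int list" assume "length xs = 3 \<and> set xs \<subseteq> Zmod (q * r)"
    hence l: "length xs = 3" by simp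
    obtain J where "J \<subseteq> {..<3}" "J \<noteq> {}" "wzsJ (q * r) (Sgrp (q * r)) (\<lambda>i. xs ! i) J"
      using UB[OF q r qr, of "\<lambda>i. xs ! i"] by blast
    hence "wzsJ (q * r) G (\<lambda>i. xs ! i) J" "J \<subseteq> {..<length xs}" "J \<noteq> {}"
      using wzsJ_mono[OF G(1)] l by simp_all
    thus "has_wzs_subseq (q * r) G xs" unfolding has_wzs_iff by blast
  qed
next
  fix k assume h: "\<forall>xs. length xs = k \<and> set xs \<subseteq> Zmod (q * r) \<longrightarrow> has_wzs_subseq (q * r) G xs"
  show "3 \<le> k"
  proof (rule ccontr)
    assume "\<not> 3 \<le> k" hence k: "k \<le> 2" by simp
    define xs where "xs = take k [1, int q]"
    have q1: "1 < q" "1 < r" using prime_gt_1_nat[OF q(1)] prime_gt_1_nat[OF r(1)] by simp_all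
    have "int q * 1 < int q * int r" by (rule mult_strict_left_mono) (use q1 in simp_all)
    hence a1: "int q < int q * int r" by simp
    have a0: "1 < int q" using q1 by simp
    have a2: "1 < int q * int r" using a0 a1 by linarith
    have zm: "set [1, int q] \<subseteq> Zmod (q * r)" unfolding Zmod_def using a1 a2 by simp
    have s: "set xs \<subseteq> Zmod (q * r)" unfolding xs_def by (rule order_trans[OF set_take_subset zm])
    have len: "length xs = k" unfolding xs_def using k by simp
    have "ZSF (q * r) (units_mod (q * r)) k (\<lambda>i. [1, int q] ! i)"
      using ZSF_less[OF ZSF2_ex[OF q(1) r(1) qr] k] .
    hence z1: "ZSF (q * r) G k (\<lambda>i. [1, int q] ! i)" by (rule ZSF_mono[OF G(2)])
    have eqs: "\<forall>i<k. [1, int q] ! i = xs ! i" unfolding xs_def by simp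
    have "ZSF (q * r) G k (\<lambda>i. xs ! i)" using ZSF_cong[OF eqs] z1 by simp
    hence "\<not> has_wzs_subseq (q * r) G xs" unfolding ZSF_list len .
    moreover have "has_wzs_subseq (q * r) G xs" using h[rule_format, of xs] s len by simp
    ultimately show False by contradiction
  qed
qed

lemma solv_mod: assumes "int p dvd m"
  shows "solv p (\<lambda>k. z k mod m) J e \<longleftrightarrow> solv p z J e"
proof -
  have c: "[(\<Sum>i\<in>J. u i * (z i mod m)) = (\<Sum>i\<in>J. u i * z i)] (mod int p)" for u
  proof (intro cong_sum cong_mult cong_refl)
    fix i show "[z i mod m = z i] (mod int p)"
      using assms by (simp add: cong_def mod_mod_cancel)
  qed
  have c2: "[(\<Sum>i\<in>J. u i * (z i mod m)) = 0] (mod int p) \<longleftrightarrow> [(\<Sum>i\<in>J. u i * z i) = 0] (mod int p)" for u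
  proof
    assume "[(\<Sum>i\<in>J. u i * (z i mod m)) = 0] (mod int p)"
    thus "[(\<Sum>i\<in>J. u i * z i) = 0] (mod int p)" using cong_trans[OF cong_sym[OF c[of u]]] by blast
  next
    assume "[(\<Sum>i\<in>J. u i * z i) = 0] (mod int p)"
    thus "[(\<Sum>i\<in>J. u i * (z i mod m)) = 0] (mod int p)" using cong_trans[OF c[of u]] by blast
  qed
  show ?thesis unfolding solv_def c2 ..
qed

lemma solv_cong: "(\<forall>i\<in>J. e i = e' i) \<Longrightarrow> solv p z J e \<longleftrightarrow> solv p z J e'"
  unfolding solv_def by auto

lemma solv_pm: assumes "prime p" "solv p z J e" shows "\<forall>i\<in>J. e i \<in> {1,-1}"
proof
  fix i assume i: "i \<in> J"
  obtain u where "\<forall>i\<in>J. \<not> int p dvd u i \<and> Legendre (u i) (int p) = e i"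
    using assms(2) unfolding solv_def by blast
  thus "e i \<in> {1,-1}" using Leg_pm1[OF assms(1), of "u i"] i by auto
qed

lemma one_in_L: assumes "prime P" "prime q" "prime r" "P \<noteq> q" "P \<noteq> r" "q \<noteq> r"
  shows "1 \<in> Lgrp (P * q * r) P"
proof -
  have a: "1 < P" "0 < q" "0 < r" using prime_gt_1_nat[OF assms(1)] prime_gt_0_nat[OF assms(2)] prime_gt_0_nat[OF assms(3)] by simp_all
  have "1 \<le> q * r" using a(2,3) by (simp add: Suc_le_eq)
  hence "P * 1 \<le> P * (q * r)" by (rule mult_le_mono2)
  hence "1 < P * (q * r)" using a(1) by linarith
  hence "1 < P * q * r" by (simp add: mult.assoc)
  hence "(1::int) < int (P * q * r)" by linarith
  moreover have "jsym 1 (P * q * r) = 1" using jsym3[OF assms] Leg_1 assms by simp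
  ultimately show ?thesis unfolding Lgrp_def units_mod_def Zmod_def using Leg_1[OF assms(1)] by simp
qed

lemma dvd3: assumes "prime P" "prime q" "prime r" "P \<noteq> q" "P \<noteq> r" "q \<noteq> r"
  and "int P dvd x" "int q dvd x" "int r dvd x" shows "int (P * q * r) dvd x"
proof -
  have "int q * int r dvd x" using divides_mult[OF assms(8,9) int_coprime_primes[OF assms(2,3,6)]] .
  moreover have "coprime (int P) (int q * int r)"
    using int_coprime_primes[OF assms(1,2,4)] int_coprime_primes[OF assms(1,3,5)] by simp
  ultimately have "int P * (int q * int r) dvd x" using divides_mult[OF assms(7)] by blast
  thus ?thesis by (simp add: mult.assoc)
qed

lemma wzsJ_single: "1 \<in> A \<Longrightarrow> int m dvd x i \<Longrightarrow> wzsJ m A x {i}"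
  unfolding wzsJ_def by (intro exI[of _ "\<lambda>_. 1"]) (simp add: cong_0_iff)

locale trip =
  fixes P q r :: nat
  assumes P: "prime P" "7 \<le> P" and q: "prime q" "7 \<le> q" and r: "prime r" "7 \<le> r"
    and d: "P \<noteq> q" "P \<noteq> r" "q \<noteq> r"
begin

lemma P2: "2 < P" and q2: "2 < q" and r2: "2 < r" using P q r by auto

lemma compL: "solv P z J e \<Longrightarrow> solv q z J s \<Longrightarrow> solv r z J s \<Longrightarrow> wzsJ (P * q * r) (Lgrp (P * q * r) P) z J"
  by (rule composeL[OF P(1) P2 q(1) q2 r(1) r2 d])

lemma core_i:
  assumes Z: "ZSF (P * q * r) (Lgrp (P * q * r) P) 3 z" and h: "int q dvd z 2" "int r dvd z 2"
  shows "\<not> int (P * q * r) dvd z 2" "ZSF (q * r) (Sgrp (q * r)) 2 (\<lambda>k. z k mod int (q * r))"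
proof -
  show nd: "\<not> int (P * q * r) dvd z 2"
  proof
    assume "int (P * q * r) dvd z 2"
    hence "wzsJ (P * q * r) (Lgrp (P * q * r) P) z {2}" using wzsJ_single one_in_L[OF P(1) q(1) r(1) d] by blast
    thus False using Z unfolding ZSF_def by auto
  qed
  have nP: "\<not> int P dvd z 2" using nd dvd3[OF P(1) q(1) r(1) d _ h] by blast
  show "ZSF (q * r) (Sgrp (q * r)) 2 (\<lambda>k. z k mod int (q * r))"
    unfolding ZSF_def
  proof (intro allI impI notI)
    fix J assume J: "J \<subseteq> {..<2}" "J \<noteq> {}" and w: "wzsJ (q * r) (Sgrp (q * r)) (\<lambda>k. z k mod int (q * r)) J"
    obtain s where s: "\<forall>i\<in>J. s i \<in> {1,-1}" "solv q (\<lambda>k. z k mod int (q * r)) J s"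
        "solv r (\<lambda>k. z k mod int (q * r)) J s"
      using decompS[OF q(1) q2 r(1) r2 d(3) w] by blast
    have sq: "solv q z J s" using s(2) solv_mod[of q "int (q * r)"] by simp
    have sr: "solv r z J s" using s(3) solv_mod[of r "int (q * r)"] by simp
    have J3: "J \<subseteq> {..<3}" using J(1) by auto
    have fJ: "finite J" using J(1) finite_subset by blast
    have n2: "2 \<notin> J" using J(1) by auto
    show False
    proof (cases "card {i\<in>J. \<not> int P dvd z i} = 1")
      case False
      obtain e where "solv P z J e" using solv_free[OF P J3 False] by blast
      hence "wzsJ (P * q * r) (Lgrp (P * q * r) P) z J" using compL sq sr by blast
      thus False using Z J3 J(2) unfolding ZSF_def by blast
    next
      case True
      let ?J = "insert 2 J"
      have J3': "?J \<subseteq> {..<3}" using J3 by auto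
      have "{i\<in>?J. \<not> int P dvd z i} = insert 2 {i\<in>J. \<not> int P dvd z i}" using nP by auto
      hence "card {i\<in>?J. \<not> int P dvd z i} = 2" using True n2 fJ by simp
      then obtain e where eP: "solv P z ?J e" using solv_free[OF P J3', of z] by auto
      define s' where "s' = (\<lambda>i. if i = 2 then 1 else s i)"
      have s'J: "\<forall>i\<in>J. s' i = s i" unfolding s'_def using n2 by auto
      have "solv q z J s'" using sq solv_cong[OF s'J] by simp
      moreover have "\<forall>i\<in>?J - J. int q dvd z i" using h by auto
      moreover have "\<forall>i\<in>?J - J. s' i \<in> {1,-1}" by (auto simp: s'_def)
      ultimately have sq': "solv q z ?J s'"
        using solv_reduce[OF q(1) q2, of ?J J z s'] fJ by auto
      have "solv r z J s'" using sr solv_cong[OF s'J] by simp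
      moreover have "\<forall>i\<in>?J - J. int r dvd z i" using h by auto
      moreover have "\<forall>i\<in>?J - J. s' i \<in> {1,-1}" by (auto simp: s'_def)
      ultimately have sr': "solv r z ?J s'"
        using solv_reduce[OF r(1) r2, of ?J J z s'] fJ by auto
      have "wzsJ (P * q * r) (Lgrp (P * q * r) P) z ?J" using compL[OF eP sq' sr'] .
      thus False using Z J3' unfolding ZSF_def by blast
    qed
  qed
qed

end

lemma card_ge2b:
  assumes "\<exists>i<3. \<not> Q i" "\<not> (\<exists>i<3. \<not> Q i \<and> (\<forall>j<3. j \<noteq> i \<longrightarrow> Q j))"
  shows "card {i\<in>{..<3::nat}. \<not> Q i} \<ge> 2"
proof -
  obtain i where i: "i < 3" "\<not> Q i" using assms(1) by blast
  then obtain j where j: "j < 3" "j \<noteq> i" "\<not> Q j" using assms(2) by blast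
  have fin: "finite {i\<in>{..<3::nat}. \<not> Q i}" by simp
  have "{i,j} \<subseteq> {i\<in>{..<3::nat}. \<not> Q i}" using i j by auto
  hence "card {i,j} \<le> card {i\<in>{..<3::nat}. \<not> Q i}" using card_mono[OF fin] by blast
  thus ?thesis using j(2) by simp
qed

context trip begin

lemma ZSF_contra: "ZSF (P * q * r) (Lgrp (P * q * r) P) 3 z \<Longrightarrow> J \<subseteq> {..<3} \<Longrightarrow> J \<noteq> {} \<Longrightarrow>
   wzsJ (P * q * r) (Lgrp (P * q * r) P) z J \<Longrightarrow> False"
  unfolding ZSF_def by blast

lemma core_ii_P:
  assumes Z: "ZSF (P * q * r) (Lgrp (P * q * r) P) 3 z" and h: "int P dvd z 0" "int P dvd z 1"
  shows "ZSF (q * r) (Sgrp (q * r)) 2 (\<lambda>k. z k mod int (q * r))"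
  unfolding ZSF_def
proof (intro allI impI notI)
  fix J assume J: "J \<subseteq> {..<2}" "J \<noteq> {}" and w: "wzsJ (q * r) (Sgrp (q * r)) (\<lambda>k. z k mod int (q * r)) J"
  obtain s where s: "\<forall>i\<in>J. s i \<in> {1,-1}" "solv q (\<lambda>k. z k mod int (q * r)) J s"
      "solv r (\<lambda>k. z k mod int (q * r)) J s"
    using decompS[OF q(1) q2 r(1) r2 d(3) w] by blast
  have sq: "solv q z J s" using s(2) solv_mod[of q "int (q * r)"] by simp
  have sr: "solv r z J s" using s(3) solv_mod[of r "int (q * r)"] by simp
  have J3: "J \<subseteq> {..<3}" using J(1) by auto
  have fJ: "finite J" using J(1) finite_subset by blast
  have J01: "\<forall>i\<in>J. i = 0 \<or> i = 1" using J(1) by auto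
  have "\<forall>i\<in>J. int P dvd z i" using J01 h by auto
  hence "solv P z J (\<lambda>_. 1)" using solv_zero[OF P(1) P2 fJ] by simp
  hence "wzsJ (P * q * r) (Lgrp (P * q * r) P) z J" using compL sq sr by blast
  thus False using ZSF_contra[OF Z J3 J(2)] by blast
qed

lemma core_ii_q:
  assumes Z: "ZSF (P * q * r) (Lgrp (P * q * r) P) 3 z" and h: "int q dvd z 0" "int q dvd z 1"
  shows "ZSF (P * r) (units_mod (P * r)) 2 (\<lambda>k. z k mod int (P * r))"
  unfolding ZSF_def
proof (intro allI impI notI)
  fix J assume J: "J \<subseteq> {..<2}" "J \<noteq> {}" and w: "wzsJ (P * r) (units_mod (P * r)) (\<lambda>k. z k mod int (P * r)) J"
  obtain e1 e2 where e: "solv P (\<lambda>k. z k mod int (P * r)) J e1" "solv r (\<lambda>k. z k mod int (P * r)) J e2"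
    using decompU[OF P(1) r(1) w] by blast
  have sP: "solv P z J e1" using e(1) solv_mod[of P "int (P * r)"] by simp
  have sr: "solv r z J e2" using e(2) solv_mod[of r "int (P * r)"] by simp
  have J3: "J \<subseteq> {..<3}" using J(1) by auto
  have fJ: "finite J" using J(1) finite_subset by blast
  have J01: "\<forall>i\<in>J. i = 0 \<or> i = 1" using J(1) by auto
  have "\<forall>i\<in>J. int q dvd z i" using J01 h by auto
  hence sq: "solv q z J e2" using solv_zero[OF q(1) q2 fJ] solv_pm[OF r(1) sr] by simp
  have "wzsJ (P * q * r) (Lgrp (P * q * r) P) z J" using compL[OF sP sq sr] .
  thus False using ZSF_contra[OF Z J3 J(2)] by blast
qed

lemma core_ii_r:
  assumes Z: "ZSF (P * q * r) (Lgrp (P * q * r) P) 3 z" and h: "int r dvd z 0" "int r dvd z 1"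
  shows "ZSF (P * q) (units_mod (P * q)) 2 (\<lambda>k. z k mod int (P * q))"
  unfolding ZSF_def
proof (intro allI impI notI)
  fix J assume J: "J \<subseteq> {..<2}" "J \<noteq> {}" and w: "wzsJ (P * q) (units_mod (P * q)) (\<lambda>k. z k mod int (P * q)) J"
  obtain e1 e2 where e: "solv P (\<lambda>k. z k mod int (P * q)) J e1" "solv q (\<lambda>k. z k mod int (P * q)) J e2"
    using decompU[OF P(1) q(1) w] by blast
  have sP: "solv P z J e1" using e(1) solv_mod[of P "int (P * q)"] by simp
  have sq: "solv q z J e2" using e(2) solv_mod[of q "int (P * q)"] by simp
  have J3: "J \<subseteq> {..<3}" using J(1) by auto
  have fJ: "finite J" using J(1) finite_subset by blast
  have J01: "\<forall>i\<in>J. i = 0 \<or> i = 1" using J(1) by auto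
  have "\<forall>i\<in>J. int r dvd z i" using J01 h by auto
  hence sr: "solv r z J e2" using solv_zero[OF r(1) r2 fJ] solv_pm[OF q(1) sq] by simp
  have "wzsJ (P * q * r) (Lgrp (P * q * r) P) z J" using compL[OF sP sq sr] .
  thus False using ZSF_contra[OF Z J3 J(2)] by blast
qed

lemma core_iii:
  assumes Z: "ZSF (P * q * r) (Lgrp (P * q * r) P) 3 z"
  shows "(\<exists>i<3. int q dvd z i \<and> int r dvd z i) \<or>
         (\<exists>p\<in>{P,q,r}. \<exists>i<3. \<not> int p dvd z i \<and> (\<forall>j<3. j \<noteq> i \<longrightarrow> int p dvd z j))"
proof (rule ccontr)
  assume neg: "\<not> ?thesis"
  hence nA: "\<forall>i<3. \<not> (int q dvd z i \<and> int r dvd z i)"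
    and nB: "\<And>p. p \<in> {P,q,r} \<Longrightarrow> \<not> (\<exists>i<3. \<not> int p dvd z i \<and> (\<forall>j<3. j \<noteq> i \<longrightarrow> int p dvd z j))"
    by blast+
  show False
  proof (cases "\<forall>i<3. int P dvd z i")
    case True
    obtain J where J: "J \<subseteq> {..<3}" "J \<noteq> {}" "wzsJ (q * r) (Sgrp (q * r)) z J"
      using UB[OF q r d(3), of z] by blast
    obtain s where s: "solv q z J s" "solv r z J s" using decompS[OF q(1) q2 r(1) r2 d(3) J(3)] by blast
    have fJ: "finite J" using J(1) finite_subset by blast
    have "solv P z J (\<lambda>_. 1)" using True J(1) by (intro solv_zero[OF P(1) P2 fJ]) auto
    thus False using compL s ZSF_contra[OF Z J(1,2)] by blast
  next
    case nP: False
    show False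
    proof (cases "\<forall>i<3. int q dvd z i")
      case True
      obtain J where J: "J \<subseteq> {..<3}" "J \<noteq> {}" "wzsJ (P * r) (Sgrp (P * r)) z J"
        using UB[OF P r d(2), of z] by blast
      obtain s where s: "\<forall>i\<in>J. s i \<in> {1,-1}" "solv P z J s" "solv r z J s"
        using decompS[OF P(1) P2 r(1) r2 d(2) J(3)] by blast
      have fJ: "finite J" using J(1) finite_subset by blast
      have "solv q z J s" using True J(1) s(1) by (intro solv_zero[OF q(1) q2 fJ]) auto
      thus False using compL s ZSF_contra[OF Z J(1,2)] by blast
    next
      case nq: False
      show False
      proof (cases "\<forall>i<3. int r dvd z i")
        case True
        obtain J where J: "J \<subseteq> {..<3}" "J \<noteq> {}" "wzsJ (P * q) (Sgrp (P * q)) z J"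
          using UB[OF P q d(1), of z] by blast
        obtain s where s: "\<forall>i\<in>J. s i \<in> {1,-1}" "solv P z J s" "solv q z J s"
          using decompS[OF P(1) P2 q(1) q2 d(1) J(3)] by blast
        have fJ: "finite J" using J(1) finite_subset by blast
        have "solv r z J s" using True J(1) s(1) by (intro solv_zero[OF r(1) r2 fJ]) auto
        thus False using compL s ZSF_contra[OF Z J(1,2)] by blast
      next
        case nr: False
        have cP: "card {i\<in>{..<3::nat}. \<not> int P dvd z i} \<ge> 2"
          using nP nB[of P] by (intro card_ge2b) auto
        have cq: "card {i\<in>{..<3::nat}. \<not> int q dvd z i} \<ge> 2"
          using nq nB[of q] by (intro card_ge2b) auto
        have cr: "card {i\<in>{..<3::nat}. \<not> int r dvd z i} \<ge> 2"
          using nr nB[of r] by (intro card_ge2b) auto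
        have "card {i\<in>{..<3::nat}. \<not> int P dvd z i} \<noteq> 1" using cP by linarith
        then obtain e where e: "solv P z {..<3} e" using solv_free[OF P, of "{..<3}" z] by auto
        obtain s where s: "solv q z {..<3} s" "solv r z {..<3} s" using coupling[OF q r cq cr nA] by blast
        have "{..<3::nat} \<noteq> {}" by (simp add: lt3_eq)
        thus False using compL[OF e s] ZSF_contra[OF Z] by blast
      qed
    qed
  qed
qed

end

lemma factor3:
  fixes n p' :: nat
  assumes sq: "squarefree n" and sz: "size (prime_factorization n) = 3" and p': "p' \<in> prime_factors n"
  shows "\<exists>q r. prime p' \<and> prime q \<and> prime r \<and> p' \<noteq> q \<and> p' \<noteq> r \<and> q \<noteq> r \<and> n = p' * q * r
           \<and> prime_factors n = {p', q, r}"
proof -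
  have n0: "n \<noteq> 0"
  proof
    assume "n = 0" with sq show False by simp
  qed
  have m1: "\<forall>p\<in>prime_factors n. multiplicity p n = 1"
    using squarefree_factorial_semiring'[OF n0] sq by simp
  have pf: "prime_factorization n = mset_set (prime_factors n)"
  proof (rule multiset_eqI)
    fix p show "count (prime_factorization n) p = count (mset_set (prime_factors n)) p"
    proof (cases "p \<in> prime_factors n")
      case True
      hence "prime p" by (rule in_prime_factors_imp_prime)
      hence "count (prime_factorization n) p = multiplicity p n" by (rule count_prime_factorization_prime)
      thus ?thesis using True m1 by simp
    next
      case False thus ?thesis by (simp add: not_in_iff)
    qed
  qed
  have "size (mset_set (prime_factors n)) = 3" by (subst pf[symmetric]) (rule sz)
  hence card: "card (prime_factors n) = 3" by (simp only: size_mset_set)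
  have c2: "card (prime_factors n - {p'}) = 2" using card_Diff_singleton[OF p'] card by simp
  have "\<exists>q r. prime_factors n - {p'} = {q, r} \<and> q \<noteq> r" using c2 unfolding card_2_iff .
  then obtain q r where qr: "prime_factors n - {p'} = {q, r}" "q \<noteq> r" by (elim exE conjE) (rule that)
  have "prime_factors n = insert p' (prime_factors n - {p'})" using p' by (rule insert_Diff[symmetric])
  hence S: "prime_factors n = {p', q, r}" unfolding qr(1) .
  have qm: "q \<in> prime_factors n - {p'}" "r \<in> prime_factors n - {p'}" unfolding qr(1) by simp_all
  have d: "p' \<noteq> q" "p' \<noteq> r" using qm by blast+
  have pr: "prime p'" "prime q" "prime r"
    using in_prime_factors_imp_prime[OF p'] in_prime_factors_imp_prime[of q n] in_prime_factors_imp_prime[of r n] qm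
    by simp_all
  have "n = (\<Prod>p\<in>prime_factors n. p ^ multiplicity p n)" using prod_prime_factors[OF n0] by simp
  also have "\<dots> = (\<Prod>p\<in>prime_factors n. p)" using m1 by (intro prod.cong) auto
  also have "\<dots> = p' * q * r" unfolding S using d qr(2) by simp
  finally have "n = p' * q * r" .
  thus ?thesis using pr d qr(2) S by blast
qed

lemma equiv_swap:
  assumes ab: "a < length xs" "b < length xs" and s: "set xs \<subseteq> Zmod n"
    and A1: "1 \<in> A" and U1: "1 \<in> units_mod n"
  shows "equiv_wrt n A xs (xs[a := xs ! b, b := xs ! a])"
proof -
  let ?ys = "xs[a := xs ! b, b := xs ! a]"
  have len: "length xs = length ?ys" by simp
  have s1: "set (xs[a := xs ! b]) \<subseteq> insert (xs ! b) (set xs)" by (rule set_update_subset_insert)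
  have s2: "set ?ys \<subseteq> insert (xs ! a) (set (xs[a := xs ! b]))" by (rule set_update_subset_insert)
  have m: "xs ! a \<in> set xs" "xs ! b \<in> set xs" using ab by simp_all
  have "set ?ys \<subseteq> set xs" using s1 s2 m by blast
  hence sy: "set ?ys \<subseteq> Zmod n" using s by blast
  have perm: "transpose a b permutes {..<length xs}" using ab by (intro permutes_swap_id) auto
  have eq: "?ys ! (transpose a b i) = xs ! i" if i: "i < length xs" for i
  proof (cases "i = a")
    case True thus ?thesis using ab by (cases "a = b") (simp_all add: nth_list_update)
  next
    case F1: False
    show ?thesis
    proof (cases "i = b")
      case True thus ?thesis using ab F1 by (simp add: nth_list_update)
    next
      case False thus ?thesis using ab F1 i by (simp add: nth_list_update)
    qed
  qed
  show ?thesis unfolding equiv_wrt_def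
    apply (intro conjI[OF len] conjI[OF sy])
    apply (rule exI[of _ "\<lambda>_. 1"], rule exI[of _ 1], rule exI[of _ "transpose a b"])
    using A1 U1 perm eq by simp
qed

lemma extremal_intro:
  assumes "set L \<subseteq> Zmod m" "davenport m G = 3" "length L = 2" "ZSF m G 2 (\<lambda>i. L ! i)"
  shows "extremal m G L"
  unfolding extremal_def using assms ZSF_list[of m G L] by simp

lemma map_mod_Zmod: "0 < m \<Longrightarrow> set (map (\<lambda>y. y mod int m) L) \<subseteq> Zmod m"
  unfolding Zmod_def by auto

lemma swap_nth: assumes "a < length xs" "b < length xs" "k < length xs"
  shows "xs[a := xs ! b, b := xs ! a] ! k = xs ! (transpose a b k)"
proof (cases "k = a")
  case True thus ?thesis using assms by (cases "a = b") (simp_all add: nth_list_update)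
next
  case F1: False
  show ?thesis
  proof (cases "k = b")
    case True thus ?thesis using assms F1 by (simp add: nth_list_update)
  next
    case False thus ?thesis using assms F1 by (simp add: nth_list_update)
  qed
qed

lemma transpose_inj3: "a < 3 \<Longrightarrow> b < 3 \<Longrightarrow> inj_on (transpose a b) {..<(3::nat)} \<and> transpose a b ` {..<3} \<subseteq> {..<3}"
  by (auto simp: inj_on_def transpose_def)

definition rot3 :: "nat \<Rightarrow> nat" where "rot3 k = (if k = 0 then 1 else if k = 1 then 2 else 0)"

lemma rot3_inj: "inj_on rot3 {..<(3::nat)} \<and> rot3 ` {..<3} \<subseteq> {..<3}"
  by (auto simp: inj_on_def rot3_def)

lemma pair_extremal:
  assumes a: "prime a" "7 \<le> a" and b: "prime b" "7 \<le> b" and ab: "a \<noteq> b"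
    and G: "Sgrp (a * b) \<subseteq> G" "G \<subseteq> units_mod (a * b)"
    and Z: "ZSF (a * b) G 2 (\<lambda>k. f k mod int (a * b))" and y: "f 0 = y0" "f 1 = y1"
  shows "extremal (a * b) G (map (\<lambda>y. y mod int (a * b)) [y0, y1])"
proof (rule extremal_intro)
  show "set (map (\<lambda>y. y mod int (a * b)) [y0, y1]) \<subseteq> Zmod (a * b)"
    using a b by (intro map_mod_Zmod) (simp add: prime_gt_0_nat)
  show "davenport (a * b) G = 3" by (rule davenport3[OF a b ab G])
  show "length (map (\<lambda>y. y mod int (a * b)) [y0, y1]) = 2" by simp
  have "\<forall>k<2. f k mod int (a * b) = map (\<lambda>y. y mod int (a * b)) [y0, y1] ! k"
    using y by (auto simp: less_2_cases_iff)
  thus "ZSF (a * b) G 2 (\<lambda>i. map (\<lambda>y. y mod int (a * b)) [y0, y1] ! i)"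
    using iffD1[OF ZSF_cong Z] by blast
qed

lemma Sgrp_sub_units: "Sgrp m \<subseteq> units_mod m" unfolding Sgrp_def by auto

theorem theorem5p3:
  fixes n p' :: nat and xs :: "int list"
  assumes "odd n" and "squarefree n" and "size (prime_factorization n) = 3"
    and "\<forall>p\<in>prime_factors n. p \<ge> 7"
    and "p' \<in> prime_factors n"
    and "length xs = 3"
    and "extremal n (Lgrp n p') xs"
  shows "(\<exists>ys. equiv_wrt n (Lgrp n p') xs ys \<and>
            ys ! 2 \<noteq> 0 \<and> int (n div p') dvd ys ! 2 \<and>
            extremal (n div p') (Sgrp (n div p'))
              (map (\<lambda>y. y mod int (n div p')) [ys ! 0, ys ! 1]))
       \<or> (\<exists>ys p. equiv_wrt n (Lgrp n p') xs ys \<and> p \<in> prime_factors n \<and>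
            \<not> int p dvd ys ! 0 \<and> int p dvd ys ! 1 \<and> int p dvd ys ! 2 \<and>
            extremal (n div p) (Sgrp (n div p))
              (map (\<lambda>y. y mod int (n div p)) [ys ! 1, ys ! 2]) \<and>
            (p \<noteq> p' \<longrightarrow> extremal (n div p) (units_mod (n div p))
              (map (\<lambda>y. y mod int (n div p)) [ys ! 1, ys ! 2])))"
proof -
  obtain q r where f: "prime p'" "prime q" "prime r" "p' \<noteq> q" "p' \<noteq> r" "q \<noteq> r" "n = p' * q * r"
      "prime_factors n = {p', q, r}"
    using factor3[OF assms(2) assms(3) assms(5)] by blast
  have ge: "7 \<le> p'" "7 \<le> q" "7 \<le> r" using assms(4) f(8) by auto
  interpret T: trip p' q r using f ge by unfold_locales auto
  have ext: "set xs \<subseteq> Zmod n" "\<not> has_wzs_subseq n (Lgrp n p') xs"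
    using assms(7) unfolding extremal_def by auto
  define z where "z = (\<lambda>i. xs ! i)"
  have Z: "ZSF (p' * q * r) (Lgrp (p' * q * r) p') 3 z"
    using ext(2) assms(6) f(7) unfolding ZSF_list z_def by simp
  have A1: "1 \<in> Lgrp n p'" using one_in_L[OF f(1-6)] f(7) by simp
  have U1: "1 \<in> units_mod n" using A1 unfolding Lgrp_def by blast
  have pos: "0 < p'" "0 < q" "0 < r" using f(1-3) by (simp_all add: prime_gt_0_nat)
  have dP: "n div p' = q * r" using f(7) pos by simp
  have dq: "n div q = p' * r" using f(7) pos by (simp add: mult.commute mult.left_commute)
  have dr: "n div r = p' * q" using f(7) pos by simp
  from T.core_iii[OF Z] show ?thesis
  proof
    assume "\<exists>i<3. int q dvd z i \<and> int r dvd z i"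
    then obtain i where i: "i < 3" "int q dvd z i" "int r dvd z i" by blast
    define ys where "ys = xs[i := xs ! 2, 2 := xs ! i]"
    have eqv: "equiv_wrt n (Lgrp n p') xs ys"
      unfolding ys_def using i assms(6) ext(1) A1 U1 by (intro equiv_swap) auto
    define z' where "z' = z \<circ> transpose i 2"
    have Z': "ZSF (p' * q * r) (Lgrp (p' * q * r) p') 3 z'"
      unfolding z'_def using transpose_inj3[of i 2] i(1) by (intro ZSF_perm Z) auto
    have ysk: "ys ! k = z' k" if "k < 3" for k
      unfolding ys_def z'_def z_def using swap_nth[of i xs 2 k] i(1) assms(6) that by simp
    have z2: "z' 2 = z i" unfolding z'_def by simp
    note ci = T.core_i[OF Z', unfolded z2, OF i(2,3)]
    have y2: "ys ! 2 = z i" using ysk[of 2] z2 by simp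
    have "ys ! 2 \<noteq> 0" using ci(1) y2 by auto
    moreover have "int (n div p') dvd ys ! 2"
      unfolding dP y2 using divides_mult[OF i(2,3) int_coprime_primes[OF f(2,3,6)]] by simp
    moreover have "extremal (n div p') (Sgrp (n div p')) (map (\<lambda>y. y mod int (n div p')) [ys ! 0, ys ! 1])"
      unfolding dP
      by (rule pair_extremal[OF f(2) ge(2) f(3) ge(3) f(6) order_refl Sgrp_sub_units, of z'])
         (use ci(2) in \<open>simp_all add: ysk\<close>)
    ultimately show ?thesis using eqv by blast
  next
    assume "\<exists>p\<in>{p',q,r}. \<exists>i<3. \<not> int p dvd z i \<and> (\<forall>j<3. j \<noteq> i \<longrightarrow> int p dvd z j)"
    then obtain p i where pi: "p \<in> {p',q,r}" "i < 3" "\<not> int p dvd z i" "\<forall>j<3. j \<noteq> i \<longrightarrow> int p dvd z j"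
      by blast
    define ys where "ys = xs[0 := xs ! i, i := xs ! 0]"
    have eqv: "equiv_wrt n (Lgrp n p') xs ys"
      unfolding ys_def using pi(2) assms(6) ext(1) A1 U1 by (intro equiv_swap) auto
    define w where "w = z \<circ> transpose 0 i"
    have W: "ZSF (p' * q * r) (Lgrp (p' * q * r) p') 3 w"
      unfolding w_def using transpose_inj3[of 0 i] pi(2) by (intro ZSF_perm Z) auto
    have ysk: "ys ! k = w k" if "k < 3" for k
      unfolding ys_def w_def z_def using swap_nth[of 0 xs i k] pi(2) assms(6) that by simp
    define z'' where "z'' = w \<circ> rot3"
    have Z'': "ZSF (p' * q * r) (Lgrp (p' * q * r) p') 3 z''"
      unfolding z''_def using rot3_inj by (intro ZSF_perm W) auto
    have r3: "rot3 0 = 1" "rot3 1 = 2" "rot3 2 = 0" by (simp_all add: rot3_def)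
    have zz: "z'' 0 = ys ! 1" "z'' 1 = ys ! 2" "z'' 2 = ys ! 0"
      unfolding z''_def comp_def r3 using ysk[of 0] ysk[of 1] ysk[of 2] by simp_all
    have y0: "ys ! 0 = z i" using ysk[of 0] unfolding w_def by simp
    have t1: "transpose 0 i 1 < 3 \<and> transpose 0 i 1 \<noteq> i" using pi(2) by (auto simp: transpose_def)
    have t2: "transpose 0 i 2 < 3 \<and> transpose 0 i 2 \<noteq> i" using pi(2) by (auto simp: transpose_def)
    have y1: "int p dvd ys ! 1" using ysk[of 1] pi(4) t1 unfolding w_def by simp
    have y2: "int p dvd ys ! 2" using ysk[of 2] pi(4) t2 unfolding w_def by simp
    have nd0: "\<not> int p dvd ys ! 0" using y0 pi(3) by simp
    have pin: "p \<in> prime_factors n" using pi(1) f(8) by simp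
    have ex: "extremal (n div p) (Sgrp (n div p)) (map (\<lambda>y. y mod int (n div p)) [ys ! 1, ys ! 2]) \<and>
            (p \<noteq> p' \<longrightarrow> extremal (n div p) (units_mod (n div p))
              (map (\<lambda>y. y mod int (n div p)) [ys ! 1, ys ! 2]))"
    proof -
      from pi(1) consider "p = p'" | "p = q" | "p = r" by blast
      thus ?thesis
      proof cases
        case 1
        have h: "int p' dvd z'' 0" "int p' dvd z'' 1" using y1 y2 zz 1 by simp_all
        have c: "ZSF (q * r) (Sgrp (q * r)) 2 (\<lambda>k. z'' k mod int (q * r))" by (rule T.core_ii_P[OF Z'' h])
        have "extremal (q * r) (Sgrp (q * r)) (map (\<lambda>y. y mod int (q * r)) [ys ! 1, ys ! 2])"
          by (rule pair_extremal[OF f(2) ge(2) f(3) ge(3) f(6) order_refl Sgrp_sub_units c]) (simp_all add: zz zz[unfolded One_nat_def])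
        thus ?thesis using 1 dP by simp
      next
        case 2
        have h: "int q dvd z'' 0" "int q dvd z'' 1" using y1 y2 zz 2 by simp_all
        have c: "ZSF (p' * r) (units_mod (p' * r)) 2 (\<lambda>k. z'' k mod int (p' * r))" by (rule T.core_ii_q[OF Z'' h])
        have e1: "extremal (p' * r) (units_mod (p' * r)) (map (\<lambda>y. y mod int (p' * r)) [ys ! 1, ys ! 2])"
          by (rule pair_extremal[OF f(1) ge(1) f(3) ge(3) f(5) Sgrp_sub_units order_refl c]) (simp_all add: zz zz[unfolded One_nat_def])
        have c2: "ZSF (p' * r) (Sgrp (p' * r)) 2 (\<lambda>k. z'' k mod int (p' * r))"
          by (rule ZSF_mono[OF Sgrp_sub_units c])
        have e2: "extremal (p' * r) (Sgrp (p' * r)) (map (\<lambda>y. y mod int (p' * r)) [ys ! 1, ys ! 2])"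
          by (rule pair_extremal[OF f(1) ge(1) f(3) ge(3) f(5) order_refl Sgrp_sub_units c2]) (simp_all add: zz zz[unfolded One_nat_def])
        show ?thesis using e1 e2 2 dq by simp
      next
        case 3
        have h: "int r dvd z'' 0" "int r dvd z'' 1" using y1 y2 zz 3 by simp_all
        have c: "ZSF (p' * q) (units_mod (p' * q)) 2 (\<lambda>k. z'' k mod int (p' * q))" by (rule T.core_ii_r[OF Z'' h])
        have e1: "extremal (p' * q) (units_mod (p' * q)) (map (\<lambda>y. y mod int (p' * q)) [ys ! 1, ys ! 2])"
          by (rule pair_extremal[OF f(1) ge(1) f(2) ge(2) f(4) Sgrp_sub_units order_refl c]) (simp_all add: zz zz[unfolded One_nat_def])
        have c2: "ZSF (p' * q) (Sgrp (p' * q)) 2 (\<lambda>k. z'' k mod int (p' * q))"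
          by (rule ZSF_mono[OF Sgrp_sub_units c])
        have e2: "extremal (p' * q) (Sgrp (p' * q)) (map (\<lambda>y. y mod int (p' * q)) [ys ! 1, ys ! 2])"
          by (rule pair_extremal[OF f(1) ge(1) f(2) ge(2) f(4) order_refl Sgrp_sub_units c2]) (simp_all add: zz zz[unfolded One_nat_def])
        show ?thesis using e1 e2 3 dr by simp
      qed
    qed
    show ?thesis using eqv pin nd0 y1 y2 ex by blast
  qed
qed

end
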